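(* Let $G$ be a finitely generated torsion-free group and $l:G\to\mathbb{Z}^n$ a proper, $\delta$-regular, $\delta$-hyperbolic length function with $ht(\delta)=1$ and such that $G_1=\{g\in G\mid ht(l(g))\le1\}$ is a finitely generated isolated subgroup of $G$. Then $G_1$ is a torsion-free word hyperbolic group, and $G_1$ (with a word metric for a finite generating set) is quasi-isometric to $(G_1,d_l)$, where $d_l(g,h)$ is the first coordinate of $l(g^{-1}h)$.
   Context: $\mathbb{Z}^n$ carries the right lexicographic order ($a<b$ iff $a_j<b_j$ for the largest $j$ with $a_j\ne b_j$); $ht(a)$ is the largest index with $a_k\ne0$, $ht(0)=0$. Length function: $l(1)=0$, $l(g)\ge0$, $l(g^{-1})=l(g)$, $l(gh)\le l(g)+l(h)$; $c(g,h)=\tfrac12(l(g)+l(h)-l(g^{-1}h))$; $\delta$-hyperbolic: $c(f,g)\ge\min\{c(f,h),c(g,h)\}-\delta$ for all $f,g,h$; $\delta$-regular: for all $g,h$ exist $g_c,h_c,g_d,h_d$ with $l(g_c)=l(h_c)=c(g,h)$, $g=g_cg_d$, $h=h_ch_d$, $l(g)=l(g_c)+l(g_d)$, $l(h)=l(h_c)+l(h_d)$, $l(g_c^{-1}h_c)\le4\delta$. Proper: $\{g\mid l(g)\le(k,0,\dots,0)\}$ is finite for all $k\in\mathbb{N}$. Isolated subgroup $H$: $g^m\in H$ for a nonzero integer $m$ implies $g\in H$. *)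

theory Defs
  imports "HOL-Algebra.Group" "HOL-Algebra.Generated_Groups" Complex_Main
begin

(* Elements of Z^n are represented as functions v :: nat => int with v i = 0
   outside {1..n}; coordinate i is v i (1-based). *)
definition zn_vec :: "nat \<Rightarrow> (nat \<Rightarrow> 'b::zero) \<Rightarrow> bool" where
  "zn_vec n v \<longleftrightarrow> (\<forall>i. (i < 1 \<or> n < i) \<longrightarrow> v i = 0)"

definition lex_less :: "(nat \<Rightarrow> 'b::linorder) \<Rightarrow> (nat \<Rightarrow> 'b) \<Rightarrow> bool" where
  "lex_less a b \<longleftrightarrow> (\<exists>j. a j < b j \<and> (\<forall>k>j. a k = b k))"

definition lex_le :: "(nat \<Rightarrow> 'b::linorder) \<Rightarrow> (nat \<Rightarrow> 'b) \<Rightarrow> bool" where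
  "lex_le a b \<longleftrightarrow> a = b \<or> lex_less a b"

definition lex_min :: "(nat \<Rightarrow> 'b::linorder) \<Rightarrow> (nat \<Rightarrow> 'b) \<Rightarrow> (nat \<Rightarrow> 'b)" where
  "lex_min a b = (if lex_le a b then a else b)"

definition ht :: "(nat \<Rightarrow> int) \<Rightarrow> nat" where
  "ht a = (if \<exists>k. a k \<noteq> 0 then Max {k. a k \<noteq> 0} else 0)"

definition length_function ::
  "('a, 'c) monoid_scheme \<Rightarrow> nat \<Rightarrow> ('a \<Rightarrow> nat \<Rightarrow> int) \<Rightarrow> bool" where
  "length_function G n l \<longleftrightarrow>
     (\<forall>g\<in>carrier G. zn_vec n (l g)) \<and>
     l \<one>\<^bsub>G\<^esub> = (\<lambda>i. 0) \<and>
     (\<forall>g\<in>carrier G. lex_le (\<lambda>i. 0) (l g)) \<and>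
     (\<forall>g\<in>carrier G. l (inv\<^bsub>G\<^esub> g) = l g) \<and>
     (\<forall>g\<in>carrier G. \<forall>h\<in>carrier G. lex_le (l (g \<otimes>\<^bsub>G\<^esub> h)) (\<lambda>i. l g i + l h i))"

definition gprod ::
  "('a, 'c) monoid_scheme \<Rightarrow> ('a \<Rightarrow> nat \<Rightarrow> int) \<Rightarrow> 'a \<Rightarrow> 'a \<Rightarrow> nat \<Rightarrow> rat" where
  "gprod G l g h = (\<lambda>i. (of_int (l g i) + of_int (l h i)
                          - of_int (l (inv\<^bsub>G\<^esub> g \<otimes>\<^bsub>G\<^esub> h) i)) / 2)"

definition hyperbolic_lf ::
  "('a, 'c) monoid_scheme \<Rightarrow> ('a \<Rightarrow> nat \<Rightarrow> int) \<Rightarrow> (nat \<Rightarrow> int) \<Rightarrow> bool" where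
  "hyperbolic_lf G l \<delta> \<longleftrightarrow>
     (\<forall>f\<in>carrier G. \<forall>g\<in>carrier G. \<forall>h\<in>carrier G.
        lex_le (\<lambda>i. lex_min (gprod G l f h) (gprod G l g h) i - of_int (\<delta> i))
               (gprod G l f g))"

definition regular_lf ::
  "('a, 'c) monoid_scheme \<Rightarrow> ('a \<Rightarrow> nat \<Rightarrow> int) \<Rightarrow> (nat \<Rightarrow> int) \<Rightarrow> bool" where
  "regular_lf G l \<delta> \<longleftrightarrow>
     (\<forall>g\<in>carrier G. \<forall>h\<in>carrier G.
        \<exists>gc\<in>carrier G. \<exists>hc\<in>carrier G. \<exists>gd\<in>carrier G. \<exists>hd\<in>carrier G.
          (\<lambda>i. of_int (l gc i)) = gprod G l g h \<and>
          (\<lambda>i. of_int (l hc i)) = gprod G l g h \<and>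
          g = gc \<otimes>\<^bsub>G\<^esub> gd \<and> h = hc \<otimes>\<^bsub>G\<^esub> hd \<and>
          l g = (\<lambda>i. l gc i + l gd i) \<and> l h = (\<lambda>i. l hc i + l hd i) \<and>
          lex_le (l (inv\<^bsub>G\<^esub> gc \<otimes>\<^bsub>G\<^esub> hc)) (\<lambda>i. 4 * \<delta> i))"

definition proper_lf :: "('a, 'c) monoid_scheme \<Rightarrow> ('a \<Rightarrow> nat \<Rightarrow> int) \<Rightarrow> bool" where
  "proper_lf G l \<longleftrightarrow>
     (\<forall>k::nat. finite {g\<in>carrier G. lex_le (l g) (\<lambda>i. if i = 1 then int k else 0)})"

definition torsion_free :: "('a, 'c) monoid_scheme \<Rightarrow> bool" where
  "torsion_free G \<longleftrightarrow>
     (\<forall>g\<in>carrier G. \<forall>m::nat. m > 0 \<longrightarrow> g [^]\<^bsub>G\<^esub> m = \<one>\<^bsub>G\<^esub> \<longrightarrow> g = \<one>\<^bsub>G\<^esub>)"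

definition finitely_generated :: "('a, 'c) monoid_scheme \<Rightarrow> bool" where
  "finitely_generated G \<longleftrightarrow>
     (\<exists>S. finite S \<and> S \<subseteq> carrier G \<and> generate G S = carrier G)"

definition isolated_subgroup :: "'a set \<Rightarrow> ('a, 'c) monoid_scheme \<Rightarrow> bool" where
  "isolated_subgroup H G \<longleftrightarrow> subgroup H G \<and>
     (\<forall>g\<in>carrier G. \<forall>m::int. m \<noteq> 0 \<longrightarrow> g [^]\<^bsub>G\<^esub> m \<in> H \<longrightarrow> g \<in> H)"

definition word_length :: "('a, 'c) monoid_scheme \<Rightarrow> 'a set \<Rightarrow> 'a \<Rightarrow> nat" where
  "word_length G S g = (LEAST k. \<exists>xs. length xs = k \<and>
       set xs \<subseteq> S \<union> (\<lambda>s. inv\<^bsub>G\<^esub> s) ` S \<and>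
       foldr (\<lambda>x y. x \<otimes>\<^bsub>G\<^esub> y) xs \<one>\<^bsub>G\<^esub> = g)"

definition word_dist :: "('a, 'c) monoid_scheme \<Rightarrow> 'a set \<Rightarrow> 'a \<Rightarrow> 'a \<Rightarrow> real" where
  "word_dist G S g h = real (word_length G S (inv\<^bsub>G\<^esub> g \<otimes>\<^bsub>G\<^esub> h))"

definition gromov_hyperbolic :: "'a set \<Rightarrow> ('a \<Rightarrow> 'a \<Rightarrow> real) \<Rightarrow> bool" where
  "gromov_hyperbolic X d \<longleftrightarrow> (\<exists>\<delta>::real. \<forall>x\<in>X. \<forall>y\<in>X. \<forall>z\<in>X. \<forall>w\<in>X.
     (d w x + d w y - d x y) / 2 \<ge>
       min ((d w x + d w z - d x z) / 2) ((d w y + d w z - d y z) / 2) - \<delta>)"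

definition word_hyperbolic :: "('a, 'c) monoid_scheme \<Rightarrow> bool" where
  "word_hyperbolic G \<longleftrightarrow> group G \<and>
     (\<exists>S. finite S \<and> S \<subseteq> carrier G \<and> generate G S = carrier G \<and>
          gromov_hyperbolic (carrier G) (word_dist G S))"

definition quasi_isometric ::
  "'a set \<Rightarrow> ('a \<Rightarrow> 'a \<Rightarrow> real) \<Rightarrow> 'b set \<Rightarrow> ('b \<Rightarrow> 'b \<Rightarrow> real) \<Rightarrow> bool" where
  "quasi_isometric X d Y e \<longleftrightarrow> (\<exists>f K C. f ` X \<subseteq> Y \<and> K \<ge> 1 \<and> C \<ge> 0 \<and>
     (\<forall>x\<in>X. \<forall>x'\<in>X. d x x' / K - C \<le> e (f x) (f x') \<and> e (f x) (f x') \<le> K * d x x' + C) \<and>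
     (\<forall>y\<in>Y. \<exists>x\<in>X. e y (f x) \<le> C))"

end

theory Submission
  imports Defs
begin


definition gp :: "('a \<Rightarrow> 'a \<Rightarrow> real) \<Rightarrow> 'a \<Rightarrow> 'a \<Rightarrow> 'a \<Rightarrow> real" where
  "gp d e x y = (d e x + d e y - d x y) / 2"

lemma gp_alt: "gp d e x y = d e x / 2 + d e y / 2 - d x y / 2"
  by (simp add: gp_def diff_divide_distrib add_divide_distrib)

lemma logbound:
  fixes a b c e :: real
  assumes a: "a \<ge> 0" and b: "b \<ge> 0" and e: "e \<ge> 0"
  shows "\<exists>B. \<forall>D\<ge>0. (\<forall>N::nat. a*D+b \<le> 2^N \<longrightarrow> D \<le> c + e*N) \<longrightarrow> D \<le> B"
proof -
  define lam where "lam = ln (2::real)"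
  have l0: "lam > 0" unfolding lam_def by simp
  define T where "T = 2*e*a/lam + 1"
  have T0: "T \<ge> 1" unfolding T_def using a e l0 by simp
  have Tl: "T*lam = 2*e*a + lam" unfolding T_def using l0 by (simp add: field_simps)
  define K where "K = c + e*(log 2 T + 1) + e*(b+1)/(T*lam)"
  show ?thesis
  proof (intro exI allI impI)
    fix D :: real assume D0: "D \<ge> 0" and H: "\<forall>N::nat. a*D+b \<le> 2^N \<longrightarrow> D \<le> c + e*N"
    define y where "y = a*D+b+1"
    have y1: "y \<ge> 1" unfolding y_def using a b D0 by simp
    have lg0: "log 2 y \<ge> 0" using y1 by simp
    define N where "N = nat \<lceil>log 2 y\<rceil>"
    have NN: "real N \<ge> log 2 y" "real N \<le> log 2 y + 1" unfolding N_def using lg0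
      by linarith+
    have "y = 2 powr (log 2 y)" using y1 by simp
    also have "\<dots> \<le> 2 powr (real N)" using NN(1) by (intro powr_mono) auto
    also have "\<dots> = 2^N" by (simp add: powr_realpow)
    finally have "a*D+b \<le> 2^N" unfolding y_def by simp
    with H have DN: "D \<le> c + e*N" by blast
    have "ln (y/T) \<le> y/T - 1" using y1 T0 by (intro ln_le_minus_one) simp
    hence "ln y \<le> ln T + y/T" using y1 T0 by (simp add: ln_div)
    hence "ln y / lam \<le> (ln T + y/T) / lam" using l0 by (intro divide_right_mono) auto
    hence "log 2 y \<le> log 2 T + y/(T*lam)" unfolding log_def lam_def
      by (simp add: add_divide_distrib)
    hence "real N \<le> log 2 T + 1 + y/(T*lam)" using NN by linarith
    hence "e*N \<le> e*(log 2 T + 1) + e*(y/(T*lam))" using e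
      by (metis distrib_left mult_left_mono)
    moreover have "e*(y/(T*lam)) = e*a*D/(T*lam) + e*(b+1)/(T*lam)" unfolding y_def
      by (simp add: add_divide_distrib[symmetric] algebra_simps)
    moreover have "e*a*D/(T*lam) \<le> D/2"
    proof -
      have Tp: "T*lam > 0" using T0 l0 by simp
      have "e*a*D*2 \<le> D*(T*lam)" unfolding Tl using D0 l0 by (simp add: algebra_simps)
      thus ?thesis using Tp by (simp add: divide_simps)
    qed
    ultimately have "D \<le> K + D/2" using DN unfolding K_def by linarith
    thus "D \<le> 2*K" by linarith
  qed
qed

locale hypsp =
  fixes X :: "'a set" and d w :: "'a \<Rightarrow> 'a \<Rightarrow> real" and \<delta> L M :: real
  assumes d0: "x\<in>X \<Longrightarrow> d x x = 0"
  and dsym: "x\<in>X \<Longrightarrow> y\<in>X \<Longrightarrow> d x y = d y x"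
  and dtri: "x\<in>X \<Longrightarrow> y\<in>X \<Longrightarrow> z\<in>X \<Longrightarrow> d x z \<le> d x y + d y z"
  and hyp: "e\<in>X \<Longrightarrow> x\<in>X \<Longrightarrow> y\<in>X \<Longrightarrow> z\<in>X \<Longrightarrow>
      gp d e x y \<ge> min (gp d e x z) (gp d e z y) - \<delta>"
  and \<delta>0: "\<delta> \<ge> 0" and L0: "L \<ge> 0" and M0: "M \<ge> 0"
  and cgeod: "x\<in>X \<Longrightarrow> y\<in>X \<Longrightarrow> \<exists>N z. z 0 = x \<and> z N = y \<and> (\<forall>t\<le>N. z t \<in> X) \<and>
      (\<forall>s t u. s\<le>t \<longrightarrow> t\<le>u \<longrightarrow> u\<le>N \<longrightarrow> d (z s) (z u) = d (z s) (z t) + d (z t) (z u)) \<and>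
      (\<forall>t<N. d (z t) (z (Suc t)) \<le> L)"
  and w0: "x\<in>X \<Longrightarrow> w x x = 0"
  and wsym: "x\<in>X \<Longrightarrow> y\<in>X \<Longrightarrow> w x y = w y x"
  and wtri: "x\<in>X \<Longrightarrow> y\<in>X \<Longrightarrow> z\<in>X \<Longrightarrow> w x z \<le> w x y + w y z"
  and wgeod: "x\<in>X \<Longrightarrow> y\<in>X \<Longrightarrow> \<exists>p m. p 0 = x \<and> p m = y \<and> (\<forall>i\<le>m. p i \<in> X) \<and>
      (\<forall>i\<le>m. \<forall>j\<le>m. w (p i) (p j) = \<bar>real i - real j\<bar>)"
  and dw: "x\<in>X \<Longrightarrow> y\<in>X \<Longrightarrow> d x y \<le> L * w x y"
  and wd: "x\<in>X \<Longrightarrow> y\<in>X \<Longrightarrow> w x y \<le> M * d x y + M"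
begin

definition cg where "cg x y z N \<longleftrightarrow> z 0 = x \<and> z N = y \<and> (\<forall>t\<le>N. z t \<in> X) \<and>
      (\<forall>s t u. s\<le>t \<longrightarrow> t\<le>u \<longrightarrow> u\<le>N \<longrightarrow> d (z s) (z u) = d (z s) (z t) + d (z t) (z u)) \<and>
      (\<forall>t<N. d (z t) (z (Suc t)) \<le> L)"

definition wg where "wg x y p m \<longleftrightarrow> p 0 = x \<and> p m = y \<and> (\<forall>i\<le>m. p i \<in> X) \<and>
      (\<forall>i\<le>m. \<forall>j\<le>m. w (p i) (p j) = \<bar>real i - real j\<bar>)"

lemma cg_ex: "x\<in>X \<Longrightarrow> y\<in>X \<Longrightarrow> \<exists>N z. cg x y z N"
  unfolding cg_def by (rule cgeod)

lemma wg_ex: "x\<in>X \<Longrightarrow> y\<in>X \<Longrightarrow> \<exists>p m. wg x y p m"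
  unfolding wg_def by (rule wgeod)

lemma cgD: assumes "cg x y z N"
  shows "z 0 = x" "z N = y" "\<And>t. t\<le>N \<Longrightarrow> z t \<in> X"
   "\<And>s t u. s\<le>t \<Longrightarrow> t\<le>u \<Longrightarrow> u\<le>N \<Longrightarrow> d (z s) (z u) = d (z s) (z t) + d (z t) (z u)"
   "\<And>t. t<N \<Longrightarrow> d (z t) (z (Suc t)) \<le> L"
  using assms unfolding cg_def by blast+
lemma wgD: assumes "wg x y p m"
  shows "p 0 = x" "p m = y" "\<And>i. i\<le>m \<Longrightarrow> p i \<in> X"
   "\<And>i j. i\<le>m \<Longrightarrow> j\<le>m \<Longrightarrow> w (p i) (p j) = \<bar>real i - real j\<bar>"
  using assms unfolding wg_def by blast+

lemma dnn: "x\<in>X \<Longrightarrow> y\<in>X \<Longrightarrow> 0 \<le> d x y"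
  using dtri[of x y x] d0[of x] dsym[of x y] by simp

lemma wnn: "x\<in>X \<Longrightarrow> y\<in>X \<Longrightarrow> 0 \<le> w x y"
  using wtri[of x y x] w0[of x] wsym[of x y] by simp

lemma gp_sym: "e\<in>X \<Longrightarrow> x\<in>X \<Longrightarrow> y\<in>X \<Longrightarrow> gp d e x y = gp d e y x"
  unfolding gp_def using dsym by simp

lemma gp_self: "e\<in>X \<Longrightarrow> x\<in>X \<Longrightarrow> gp d e x x = d e x"
  unfolding gp_def using d0 by simp

lemma chain:
  assumes "\<forall>i. a \<le> i \<and> i \<le> b \<longrightarrow> c i \<in> X" "q\<in>X" "a<b" "b - a \<le> 2^N"
    "\<forall>i. a \<le> i \<and> i < b \<longrightarrow> gp d q (c i) (c (Suc i)) \<ge> \<mu>"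
  shows "gp d q (c a) (c b) \<ge> \<mu> - \<delta> * N"
  using assms
proof (induction N arbitrary: a b)
  case 0
  then have "b = Suc a" by simp
  with 0 show ?case by auto
next
  case (Suc N)
  show ?case
  proof (cases "b - a \<le> 2^N")
    case True
    with Suc.IH[of a b] Suc.prems have "gp d q (c a) (c b) \<ge> \<mu> - \<delta> * N" by blast
    moreover have "\<delta> * N \<le> \<delta> * Suc N" using \<delta>0 by (simp add: mult_left_mono)
    ultimately show ?thesis by linarith
  next
    case False
    define h where "h = a + 2^N"
    have h: "a < h" "h < b" "h - a \<le> 2^N" "b - h \<le> 2^N" using False Suc.prems(4) unfolding h_def
      by auto
    have 1: "gp d q (c a) (c h) \<ge> \<mu> - \<delta> * N" using Suc.IH[of a h] Suc.prems h by auto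
    have 2: "gp d q (c h) (c b) \<ge> \<mu> - \<delta> * N" using Suc.IH[of h b] Suc.prems h by auto
    have X: "c a \<in> X" "c b \<in> X" "c h \<in> X" using Suc.prems h by auto
    have "gp d q (c a) (c b) \<ge> min (gp d q (c a) (c h)) (gp d q (c h) (c b)) - \<delta>"
      using hyp[OF Suc.prems(2) X] .
    hence "gp d q (c a) (c b) \<ge> \<mu> - \<delta> * N - \<delta>" using 1 2 by (smt (verit) min_def)
    thus ?thesis by (simp add: distrib_left)
  qed
qed

end

context hypsp begin

lemma part1_core:
  assumes cg: "cg x y z N" and wg: "wg x y p m" and t0: "t0 \<le> N"
  and Dmin: "\<forall>i\<le>m. D \<le> d (z t0) (p i)" and Dmax: "\<forall>t\<le>N. \<exists>i\<le>m. d (z t) (p i) \<le> D"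
  and D0: "D \<ge> 0" and NN: "6*M*D + (2*M*L+M) \<le> 2^N'"
  shows "D \<le> L/2 + 2*\<delta> + \<delta>*N'"
proof -
  note z0 = cgD(1)[OF cg] and zN = cgD(2)[OF cg] and zX = cgD(3)[OF cg]
    and ex = cgD(4)[OF cg] and gap = cgD(5)[OF cg]
  note p0 = wgD(1)[OF wg] and pm = wgD(2)[OF wg] and pX = wgD(3)[OF wg] and pw = wgD(4)[OF wg]
  define x0 where "x0 = z t0"
  have x0X: "x0 \<in> X" unfolding x0_def using zX[OF t0] .
  have "\<exists>t1\<le>t0. d (z t1) x0 \<le> 2*D + L \<and> (t1 = 0 \<or> 2*D \<le> d (z t1) x0)"
  proof (cases "\<exists>t\<le>t0. 2*D \<le> d (z t) x0")
    case True
    define S where "S = {t. t \<le> t0 \<and> 2*D \<le> d (z t) x0}"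
    have fin: "finite S" unfolding S_def by simp
    have ne: "S \<noteq> {}" using True unfolding S_def by auto
    define t1 where "t1 = Max S"
    have t1S: "t1 \<in> S" unfolding t1_def using fin ne by (rule Max_in)
    show ?thesis
    proof (cases "t1 = t0")
      case True
      then have "d (z t1) x0 = 0" unfolding x0_def using d0 zX[OF t0] by simp
      then show ?thesis using t1S L0 D0 unfolding S_def by auto
    next
      case False
      then have lt: "t1 < t0" using t1S unfolding S_def by auto
      have "Suc t1 \<notin> S"
      proof
        assume "Suc t1 \<in> S"
        then have "Suc t1 \<le> t1" unfolding t1_def by (rule Max_ge[OF fin])
        then show False by simp
      qed
      then have a: "d (z (Suc t1)) x0 < 2*D" using lt unfolding S_def by auto
      have b: "d (z t1) x0 = d (z t1) (z (Suc t1)) + d (z (Suc t1)) x0"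
        unfolding x0_def using ex[of t1 "Suc t1" t0] lt t0 by simp
      have c: "d (z t1) (z (Suc t1)) \<le> L" using gap[of t1] lt t0 by simp
      show ?thesis using a b c t1S unfolding S_def by (intro exI[of _ t1]) auto
    qed
  next
    case False
    then show ?thesis using L0 by (intro exI[of _ 0]) auto
  qed
  then obtain t1 where t1: "t1 \<le> t0" "d (z t1) x0 \<le> 2*D + L" "t1 = 0 \<or> 2*D \<le> d (z t1) x0"
    by blast
  have "\<exists>t2. t0 \<le> t2 \<and> t2 \<le> N \<and> d x0 (z t2) \<le> 2*D + L \<and> (t2 = N \<or> 2*D \<le> d x0 (z t2))"
  proof (cases "\<exists>t. t0 \<le> t \<and> t \<le> N \<and> 2*D \<le> d x0 (z t)")
    case True
    define S where "S = {t. t0 \<le> t \<and> t \<le> N \<and> 2*D \<le> d x0 (z t)}"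
    have fin: "finite S" unfolding S_def by simp
    have ne: "S \<noteq> {}" using True unfolding S_def by auto
    define t2 where "t2 = Min S"
    have t2S: "t2 \<in> S" unfolding t2_def using fin ne by (rule Min_in)
    show ?thesis
    proof (cases "t2 = t0")
      case True
      then have "d x0 (z t2) = 0" unfolding x0_def using d0 zX[OF t0] True by simp
      then show ?thesis using t2S L0 D0 unfolding S_def by auto
    next
      case False
      then have lt: "t0 < t2" using t2S unfolding S_def by auto
      obtain t' where t': "t2 = Suc t'" using lt by (cases t2) auto
      have "t' \<notin> S"
      proof
        assume "t' \<in> S"
        then have "t2 \<le> t'" unfolding t2_def by (rule Min_le[OF fin])
        then show False using t' by simp
      qed
      then have a: "d x0 (z t') < 2*D" using lt t' t2S unfolding S_def by auto
      have t2N: "t2 \<le> N" using t2S unfolding S_def by simp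
      have b: "d x0 (z t2) = d x0 (z t') + d (z t') (z t2)"
        unfolding x0_def using ex[of t0 t' t2] lt t' t2N by simp
      have c: "d (z t') (z t2) \<le> L" using gap[of t'] t' t2S unfolding S_def by simp
      show ?thesis using a b c t2S unfolding S_def by (intro exI[of _ t2]) auto
    qed
  next
    case False
    then show ?thesis using L0 t0 by (intro exI[of _ N]) auto
  qed
  then obtain t2 where t2: "t0 \<le> t2" "t2 \<le> N" "d x0 (z t2) \<le> 2*D + L" "t2 = N \<or> 2*D \<le> d x0 (z t2)"
    by blast
  have xX: "x \<in> X" and yX: "y \<in> X" using zX[of 0] zX[of N] z0 zN by auto
  have "\<exists>i1\<le>m. d (z t1) (p i1) \<le> D \<and> (t1 = 0 \<longrightarrow> i1 = 0)"
  proof (cases "t1 = 0")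
    case True
    then show ?thesis using z0 p0 d0 xX D0 by (intro exI[of _ 0]) auto
  next
    case False
    then show ?thesis using Dmax t1 t0 by auto
  qed
  then obtain i1 where i1: "i1 \<le> m" "d (z t1) (p i1) \<le> D" "t1 = 0 \<longrightarrow> i1 = 0" by blast
  have "\<exists>i2\<le>m. d (z t2) (p i2) \<le> D \<and> (t2 = N \<longrightarrow> i2 = m)"
  proof (cases "t2 = N")
    case True
    then show ?thesis using zN pm d0 yX D0 by (intro exI[of _ m]) auto
  next
    case False
    then show ?thesis using Dmax t2 by auto
  qed
  then obtain i2 where i2: "i2 \<le> m" "d (z t2) (p i2) \<le> D" "t2 = N \<longrightarrow> i2 = m" by blast
  define y1 where "y1 = z t1"
  define z1 where "z1 = z t2"
  have y1X: "y1 \<in> X" unfolding y1_def using zX[of t1] t1 t0 by simp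
  have z1X: "z1 \<in> X" unfolding z1_def using zX[of t2] t2 by simp
  have pi1X: "p i1 \<in> X" using pX[of i1] i1 by simp
  have pi2X: "p i2 \<in> X" using pX[of i2] i2 by simp
  have g1: "gp d x0 y1 (p i1) \<ge> D"
  proof (cases "t1 = 0")
    case True
    then have "y1 = p i1" using i1 z0 p0 unfolding y1_def by auto
    then show ?thesis using gp_self[OF x0X pi1X] Dmin i1 unfolding x0_def by auto
  next
    case False
    then have "2*D \<le> d y1 x0" using t1 unfolding y1_def by auto
    moreover have "D \<le> d x0 (p i1)" using Dmin i1 unfolding x0_def by auto
    moreover have "d y1 x0 = d x0 y1" using dsym[OF y1X x0X] .
    ultimately show ?thesis using i1(2) unfolding gp_def y1_def by auto
  qed
  have g3: "gp d x0 (p i2) z1 \<ge> D"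
  proof (cases "t2 = N")
    case True
    then have "z1 = p i2" using i2 zN pm unfolding z1_def by auto
    then show ?thesis using gp_self[OF x0X pi2X] Dmin i2 unfolding x0_def by auto
  next
    case False
    then have "2*D \<le> d x0 z1" using t2 unfolding z1_def by auto
    moreover have "D \<le> d x0 (p i2)" using Dmin i2 unfolding x0_def by auto
    moreover have "d (p i2) z1 = d z1 (p i2)" using dsym[OF pi2X z1X] .
    ultimately show ?thesis using i2(2) unfolding gp_def z1_def by auto
  qed
  have dd: "d (p i1) (p i2) \<le> 6*D + 2*L"
  proof -
    have "d (p i1) (p i2) \<le> d (p i1) y1 + d y1 (p i2)" using dtri[OF pi1X y1X pi2X] .
    moreover have "d y1 (p i2) \<le> d y1 x0 + d x0 (p i2)" using dtri[OF y1X x0X pi2X] .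
    moreover have "d x0 (p i2) \<le> d x0 z1 + d z1 (p i2)" using dtri[OF x0X z1X pi2X] .
    moreover have "d (p i1) y1 = d y1 (p i1)" using dsym[OF pi1X y1X] .
    ultimately show ?thesis using t1 t2 i1 i2 unfolding y1_def z1_def by linarith
  qed
  have "w (p i1) (p i2) \<le> M * d (p i1) (p i2) + M" using wd[OF pi1X pi2X] .
  also have "\<dots> \<le> M * (6*D + 2*L) + M" using dd M0 by (simp add: mult_left_mono)
  finally have "\<bar>real i1 - real i2\<bar> \<le> 2^N'" using pw[of i1 i2] i1 i2 NN by (simp add: algebra_simps)
  hence A: "real (i2 - i1) \<le> real ((2::nat)^N')" "real (i1 - i2) \<le> real ((2::nat)^N')"
    by (cases "i1 \<le> i2"; simp add: of_nat_diff)+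
  hence ab: "i2 - i1 \<le> 2^N'" "i1 - i2 \<le> 2^N'" by (simp_all only: of_nat_le_iff)
  have step: "\<forall>i. i < m \<longrightarrow> gp d x0 (p i) (p (Suc i)) \<ge> D - L/2"
  proof (intro allI impI)
    fix i assume im: "i < m"
    have "d (p i) (p (Suc i)) \<le> L * w (p i) (p (Suc i))" using dw pX[of i] pX[of "Suc i"] im by simp
    also have "w (p i) (p (Suc i)) = 1" using pw[of i "Suc i"] im by simp
    finally have "d (p i) (p (Suc i)) \<le> L" by simp
    moreover have "D \<le> d x0 (p i)" "D \<le> d x0 (p (Suc i))" using Dmin im unfolding x0_def by auto
    ultimately show "gp d x0 (p i) (p (Suc i)) \<ge> D - L/2" unfolding gp_def by auto
  qed
  have nn: "0 \<le> \<delta> * N'" using \<delta>0 by simp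
  have g2: "gp d x0 (p i1) (p i2) \<ge> D - L/2 - \<delta>*N'"
  proof (cases i1 i2 rule: linorder_cases)
    case less
    have "gp d x0 (p i1) (p i2) \<ge> (D - L/2) - \<delta>*N'"
      using pX i1 i2 step less ab by (intro chain) (auto simp: x0X)
    then show ?thesis by simp
  next
    case equal
    then show ?thesis using gp_self[OF x0X pi1X] Dmin i1 nn L0 unfolding x0_def by auto
  next
    case greater
    have "gp d x0 (p i2) (p i1) \<ge> (D - L/2) - \<delta>*N'"
      using pX i1 i2 step greater ab by (intro chain) (auto simp: x0X)
    then show ?thesis using gp_sym[OF x0X pi1X pi2X] by simp
  qed
  have g4: "gp d x0 y1 z1 = 0"
  proof -
    have "d y1 z1 = d y1 x0 + d x0 z1" using ex[of t1 t0 t2] t1 t2 unfolding y1_def z1_def x0_def by simp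
    thus ?thesis unfolding gp_def using dsym[OF y1X x0X] by simp
  qed
  have h1: "gp d x0 y1 z1 \<ge> min (gp d x0 y1 (p i1)) (gp d x0 (p i1) z1) - \<delta>"
    using hyp[OF x0X y1X z1X pi1X] .
  have h2: "gp d x0 (p i1) z1 \<ge> min (gp d x0 (p i1) (p i2)) (gp d x0 (p i2) z1) - \<delta>"
    using hyp[OF x0X pi1X z1X pi2X] .
  have "gp d x0 (p i1) z1 \<ge> D - L/2 - \<delta>*N' - \<delta>"
    using g2 g3 h2 nn L0 by (simp add: min_def split: if_splits)
  moreover have "D - L/2 - \<delta>*N' - \<delta> \<le> D" using nn L0 \<delta>0 by linarith
  ultimately have "min (gp d x0 y1 (p i1)) (gp d x0 (p i1) z1) \<ge> D - L/2 - \<delta>*N' - \<delta>"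
    using g1 by linarith
  then show ?thesis using g4 h1 by linarith
qed

end

context hypsp begin

lemma morse1: "\<exists>B1\<ge>0. \<forall>x y z N p m. cg x y z N \<longrightarrow> wg x y p m \<longrightarrow> (\<forall>t\<le>N. \<exists>i\<le>m. d (z t) (p i) \<le> B1)"
proof -
  obtain B where B: "\<forall>D\<ge>0. (\<forall>N'::nat. (6*M)*D + (2*M*L+M) \<le> 2^N' \<longrightarrow> D \<le> (L/2 + 2*\<delta>) + \<delta>*N') \<longrightarrow> D \<le> B"
    using logbound[of "6*M" "2*M*L+M" \<delta> "L/2 + 2*\<delta>"] M0 L0 \<delta>0 by auto
  show ?thesis
  proof (intro exI[of _ "max B 0"] conjI allI impI)
    fix x y z N p m t assume cg: "cg x y z N" and wg: "wg x y p m" and tN: "t \<le> N"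
    note zX = cgD(3)[OF cg] and pX = wgD(3)[OF wg]
    define \<rho> where "\<rho> t = Min ((\<lambda>i. d (z t) (p i)) ` {..m})" for t
    define D where "D = Max (\<rho> ` {..N})"
    have \<rho>le: "\<rho> t \<le> d (z t) (p i)" if "i \<le> m" for t i
      unfolding \<rho>_def using that by (intro Min_le) auto
    have \<rho>in: "\<exists>i\<le>m. d (z t) (p i) = \<rho> t" for t
    proof -
      have "\<rho> t \<in> (\<lambda>i. d (z t) (p i)) ` {..m}" unfolding \<rho>_def by (intro Min_in) auto
      thus ?thesis by auto
    qed
    have Dge: "\<rho> t \<le> D" if "t \<le> N" for t unfolding D_def using that by (intro Max_ge) auto
    have "D \<in> \<rho> ` {..N}" unfolding D_def by (intro Max_in) auto
    then obtain t0 where t0: "t0 \<le> N" "D = \<rho> t0" by auto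
    have Dmin: "\<forall>i\<le>m. D \<le> d (z t0) (p i)" using t0 \<rho>le by auto
    have Dmax: "\<forall>t\<le>N. \<exists>i\<le>m. d (z t) (p i) \<le> D" using \<rho>in Dge by (metis order_refl order_trans)
    have D0: "D \<ge> 0" using \<rho>in[of t0] t0 dnn zX pX by (metis)
    have "D \<le> B"
      using B[rule_format, OF D0] part1_core[OF cg wg t0(1) Dmin Dmax D0] by auto
    then show "\<exists>i\<le>m. d (z t) (p i) \<le> max B 0" using Dmax tN by force
  qed simp
qed

lemma morse2: "\<exists>B2\<ge>0. \<forall>x y z N p m. cg x y z N \<longrightarrow> wg x y p m \<longrightarrow> (\<forall>i\<le>m. \<exists>t\<le>N. d (p i) (z t) \<le> B2)"
proof -
  obtain B1 where B10: "B1 \<ge> 0" and B1: "\<forall>x y z N p m. cg x y z N \<longrightarrow> wg x y p m \<longrightarrow> (\<forall>t\<le>N. \<exists>i\<le>m. d (z t) (p i) \<le> B1)"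
    using morse1 by blast
  define B2 where "B2 = B1 + L*(M*(2*B1+L)+M)"
  have B20: "B2 \<ge> 0" unfolding B2_def using B10 L0 M0 by simp
  show ?thesis
  proof (intro exI[of _ B2] conjI allI impI)
    show "B2 \<ge> 0" by (rule B20)
    fix x y z N p m i assume cg: "cg x y z N" and wg: "wg x y p m" and im: "i \<le> m"
    note z0 = cgD(1)[OF cg] and zN = cgD(2)[OF cg] and zX = cgD(3)[OF cg]
      and ex = cgD(4)[OF cg] and gap = cgD(5)[OF cg]
    note p0 = wgD(1)[OF wg] and pm = wgD(2)[OF wg] and pX = wgD(3)[OF wg] and pw = wgD(4)[OF wg]
    have xX: "x \<in> X" and yX: "y \<in> X" using zX[of 0] zX[of N] z0 zN by auto
    show "\<exists>t\<le>N. d (p i) (z t) \<le> B2"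
    proof (cases "N = 0")
      case True
      then have "x = y" using z0 zN by simp
      then have "w (p 0) (p m) = 0" using p0 pm w0 xX by simp
      then have "m = 0" using pw[of 0 m] by simp
      then have "i = 0" using im by simp
      then show ?thesis using True p0 z0 d0 xX B20 by (intro exI[of _ 0]) auto
    next
      case False
      define \<phi> where "\<phi> t = (if t = N then m else if t = 0 then 0 else (SOME j. j \<le> m \<and> d (z t) (p j) \<le> B1))" for t
      have \<phi>: "\<phi> t \<le> m \<and> d (z t) (p (\<phi> t)) \<le> B1" if "t \<le> N" for t
      proof -
        consider "t = N" | "t \<noteq> N" "t = 0" | "t \<noteq> N" "t \<noteq> 0" by blast
        then show ?thesis
        proof cases
          case 1 then show ?thesis unfolding \<phi>_def using zN pm d0 yX B10 by simp
        next
          case 2 then show ?thesis unfolding \<phi>_def using z0 p0 d0 xX B10 by simp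
        next
          case 3
          have e: "\<exists>j. j \<le> m \<and> d (z t) (p j) \<le> B1" using B1 cg wg that by blast
          from someI_ex[OF e] show ?thesis unfolding \<phi>_def using 3 by simp
        qed
      qed
      define T where "T = {t. t \<le> N \<and> \<phi> t \<le> i}"
      have fin: "finite T" unfolding T_def by simp
      have "0 \<in> T" unfolding T_def \<phi>_def using False by simp
      then have ne: "T \<noteq> {}" by auto
      define ts where "ts = Max T"
      have tsT: "ts \<in> T" unfolding ts_def using fin ne by (rule Max_in)
      show ?thesis
      proof (cases "ts = N")
        case True
        then have "m \<le> i" using tsT unfolding T_def \<phi>_def by simp
        then have "i = m" using im by simp
        then show ?thesis using zN pm d0 yX B20 by (intro exI[of _ N]) auto
      next
        case False
        then have lt: "ts < N" using tsT unfolding T_def by simp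
        have "Suc ts \<notin> T"
        proof
          assume "Suc ts \<in> T"
          then have "Suc ts \<le> ts" unfolding ts_def by (rule Max_ge[OF fin])
          then show False by simp
        qed
        then have gi: "i < \<phi> (Suc ts)" using lt unfolding T_def by auto
        have li: "\<phi> ts \<le> i" using tsT unfolding T_def by simp
        have \<phi>1: "\<phi> ts \<le> m" "d (z ts) (p (\<phi> ts)) \<le> B1" using \<phi>[of ts] lt by auto
        have \<phi>2: "\<phi> (Suc ts) \<le> m" "d (z (Suc ts)) (p (\<phi> (Suc ts))) \<le> B1" using \<phi>[of "Suc ts"] lt by auto
        have zt1: "z ts \<in> X" and zt2: "z (Suc ts) \<in> X" using zX lt by auto
        have pa: "p (\<phi> ts) \<in> X" and pb: "p (\<phi> (Suc ts)) \<in> X" and pi: "p i \<in> X"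
          using pX \<phi>1 \<phi>2 im by auto
        have "d (p (\<phi> ts)) (p (\<phi> (Suc ts))) \<le> d (p (\<phi> ts)) (z ts) + d (z ts) (p (\<phi> (Suc ts)))"
          using dtri[OF pa zt1 pb] .
        moreover have "d (z ts) (p (\<phi> (Suc ts))) \<le> d (z ts) (z (Suc ts)) + d (z (Suc ts)) (p (\<phi> (Suc ts)))"
          using dtri[OF zt1 zt2 pb] .
        moreover have "d (z ts) (z (Suc ts)) \<le> L" using gap lt by simp
        moreover have "d (p (\<phi> ts)) (z ts) = d (z ts) (p (\<phi> ts))" using dsym[OF pa zt1] .
        ultimately have dd: "d (p (\<phi> ts)) (p (\<phi> (Suc ts))) \<le> 2*B1 + L" using \<phi>1 \<phi>2 by linarith
        have "w (p (\<phi> ts)) (p (\<phi> (Suc ts))) \<le> M * d (p (\<phi> ts)) (p (\<phi> (Suc ts))) + M" using wd[OF pa pb] .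
        also have "\<dots> \<le> M*(2*B1+L) + M" using dd M0 by (simp add: mult_left_mono)
        finally have "real (\<phi> (Suc ts)) - real (\<phi> ts) \<le> M*(2*B1+L) + M" using pw[of "\<phi> ts" "\<phi> (Suc ts)"] \<phi>1 \<phi>2 by simp
        moreover have "w (p i) (p (\<phi> ts)) = real i - real (\<phi> ts)" using pw[of i "\<phi> ts"] im \<phi>1 li by simp
        ultimately have wi: "w (p i) (p (\<phi> ts)) \<le> M*(2*B1+L) + M" using gi by linarith
        have "d (p i) (p (\<phi> ts)) \<le> L * w (p i) (p (\<phi> ts))" using dw[OF pi pa] .
        also have "\<dots> \<le> L * (M*(2*B1+L) + M)" using wi L0 by (simp add: mult_left_mono)
        finally have "d (p i) (p (\<phi> ts)) \<le> L * (M*(2*B1+L) + M)" .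
        moreover have "d (p i) (z ts) \<le> d (p i) (p (\<phi> ts)) + d (p (\<phi> ts)) (z ts)" using dtri[OF pi pa zt1] .
        ultimately have "d (p i) (z ts) \<le> B2" unfolding B2_def using \<phi>1 dsym[OF pa zt1] by linarith
        then show ?thesis using lt by (intro exI[of _ ts]) auto
      qed
    qed
  qed
qed

end

context hypsp begin

lemma near_cg: assumes cg: "cg x y z N" and qX: "q \<in> X"
  shows "\<exists>t\<le>N. d q (z t) \<le> 2 * gp d q x y + 2*L + 2*\<delta>"
proof -
  note z0 = cgD(1)[OF cg] and zN = cgD(2)[OF cg] and zX = cgD(3)[OF cg]
    and ex = cgD(4)[OF cg] and gap = cgD(5)[OF cg]
  have xX: "x \<in> X" and yX: "y \<in> X" using zX[of 0] zX[of N] z0 zN by auto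
  define T where "T = gp d q x y"
  have dqy: "d q y = 2*T + d x y - d x q" unfolding T_def gp_def using dsym[OF xX qX] by (simp add: field_simps)
  show ?thesis
  proof (cases "d x y \<le> d x q")
    case True
    have "d q (z N) \<le> 2*T + 2*L + 2*\<delta>" using zN dqy True L0 \<delta>0 by simp
    then show ?thesis unfolding T_def by (intro exI[of _ N]) auto
  next
    case False
    define S where "S = {t. t \<le> N \<and> d x (z t) \<le> d x q}"
    have fin: "finite S" unfolding S_def by simp
    have "0 \<in> S" unfolding S_def using z0 d0[OF xX] dnn[OF xX qX] by simp
    then have ne: "S \<noteq> {}" by auto
    define t where "t = Max S"
    have tS: "t \<in> S" unfolding t_def using fin ne by (rule Max_in)
    have tN: "t < N"
    proof -
      have "t \<le> N" using tS unfolding S_def by simp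
      moreover have "t \<noteq> N" using tS False zN unfolding S_def by auto
      ultimately show ?thesis by simp
    qed
    have "Suc t \<notin> S"
    proof
      assume "Suc t \<in> S"
      then have "Suc t \<le> t" unfolding t_def by (rule Max_ge[OF fin])
      then show False by simp
    qed
    then have a: "d x (z (Suc t)) > d x q" using tN unfolding S_def by auto
    have b: "d x (z (Suc t)) = d x (z t) + d (z t) (z (Suc t))" using ex[of 0 t "Suc t"] tN z0 by simp
    have c: "d (z t) (z (Suc t)) \<le> L" using gap tN by simp
    have lo: "d x (z t) \<ge> d x q - L" using a b c by linarith
    have hi: "d x (z t) \<le> d x q" using tS unfolding S_def by simp
    have ztX: "z t \<in> X" using zX tN by simp
    have exy: "d x y = d x (z t) + d (z t) y" using ex[of 0 t N] tN z0 zN by simp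
    have h: "gp d x q (z t) \<ge> min (gp d x q y) (gp d x y (z t)) - \<delta>" using hyp[OF xX qX ztX yX] .
    have g1: "gp d x q y = d x q - T" unfolding gp_alt using dqy dsym[OF qX yX] by (simp add: diff_divide_distrib add_divide_distrib)
    have g2: "gp d x y (z t) = d x (z t)" unfolding gp_alt using exy dsym[OF ztX yX] by (simp add: diff_divide_distrib add_divide_distrib)
    have "gp d x q (z t) \<ge> d x q - T - L - \<delta>"
    proof -
      have T0: "T \<ge> 0" unfolding T_def gp_def using dtri[OF xX qX yX] dsym[OF xX qX] by simp
      have "min (gp d x q y) (gp d x y (z t)) \<ge> d x q - T - L" using g1 g2 lo L0 T_def T0
        by (simp add: min_def)
      thus ?thesis using h by linarith
    qed
    then have "d q (z t) \<le> 2*T + 2*L + 2*\<delta>" unfolding gp_alt using hi dsym[OF xX qX] by linarith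
    then show ?thesis unfolding T_def using tN by (intro exI[of _ t]) auto
  qed
qed

lemma gp_lip: assumes "q\<in>X" "q'\<in>X" "x\<in>X" "y\<in>X"
  shows "gp d q x y \<le> gp d q' x y + d q q'"
proof -
  have "d q x \<le> d q q' + d q' x" "d q y \<le> d q q' + d q' y" using dtri assms by auto
  thus ?thesis unfolding gp_alt by linarith
qed

lemma thin: "\<exists>C\<ge>0. \<forall>x y z p m u mu v mv. wg x z p m \<longrightarrow> wg x y u mu \<longrightarrow> wg y z v mv \<longrightarrow>
   (\<forall>i\<le>m. (\<exists>j\<le>mu. w (p i) (u j) \<le> C) \<or> (\<exists>j\<le>mv. w (p i) (v j) \<le> C))"
proof -
  obtain B1 where B10: "B1 \<ge> 0" and B1: "\<forall>x y z N p m. cg x y z N \<longrightarrow> wg x y p m \<longrightarrow> (\<forall>t\<le>N. \<exists>i\<le>m. d (z t) (p i) \<le> B1)"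
    using morse1 by blast
  obtain B2 where B20: "B2 \<ge> 0" and B2: "\<forall>x y z N p m. cg x y z N \<longrightarrow> wg x y p m \<longrightarrow> (\<forall>i\<le>m. \<exists>t\<le>N. d (p i) (z t) \<le> B2)"
    using morse2 by blast
  define B3 where "B3 = 2*B2 + 4*\<delta> + 2*L + B1"
  have near: "\<exists>j\<le>mu. w q (u j) \<le> M*B3 + M"
    if wgu: "wg a b u mu" and qX: "q \<in> X" and gpq: "gp d q a b \<le> B2 + \<delta>" for a b u mu q
  proof -
    have aX: "a \<in> X" and bX: "b \<in> X" using wgD(3)[OF wgu, of 0] wgD(3)[OF wgu, of mu]
      wgD(1,2)[OF wgu] by auto
    obtain N zz where cg: "cg a b zz N" using cg_ex[OF aX bX] by blast
    obtain t where t: "t \<le> N" "d q (zz t) \<le> 2 * gp d q a b + 2*L + 2*\<delta>" using near_cg[OF cg qX] by blast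
    obtain j where j: "j \<le> mu" "d (zz t) (u j) \<le> B1" using B1 cg wgu t(1) by blast
    have ztX: "zz t \<in> X" using cgD(3)[OF cg] t by simp
    have ujX: "u j \<in> X" using wgD(3)[OF wgu] j by simp
    have "d q (u j) \<le> d q (zz t) + d (zz t) (u j)" using dtri[OF qX ztX ujX] .
    then have "d q (u j) \<le> B3" unfolding B3_def using t j gpq by linarith
    then have "w q (u j) \<le> M*B3 + M" using wd[OF qX ujX] M0 by (smt (verit) mult_left_mono)
    then show ?thesis using j by blast
  qed
  show ?thesis
  proof (intro exI[of _ "M*B3+M"] conjI allI impI)
    show "0 \<le> M*B3+M" unfolding B3_def using M0 B10 B20 L0 \<delta>0 by simp
    fix x y z p m u mu v mv i
    assume p: "wg x z p m" and u: "wg x y u mu" and v: "wg y z v mv" and im: "i \<le> m"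
    have xX: "x \<in> X" and zX: "z \<in> X" using wgD(3)[OF p, of 0] wgD(3)[OF p, of m] wgD(1,2)[OF p] by auto
    have yX: "y \<in> X" using wgD(3)[OF u, of mu] wgD(2)[OF u] by auto
    have piX: "p i \<in> X" using wgD(3)[OF p] im by simp
    obtain N zz where cg: "cg x z zz N" using cg_ex[OF xX zX] by blast
    obtain t where t: "t \<le> N" "d (p i) (zz t) \<le> B2" using B2 cg p im by blast
    have ztX: "zz t \<in> X" using cgD(3)[OF cg] t by simp
    have "gp d (zz t) x z = 0"
    proof -
      have "d x z = d x (zz t) + d (zz t) z" using cgD(4)[OF cg, of 0 t N] t cgD(1,2)[OF cg] by simp
      thus ?thesis using dsym[OF ztX xX] unfolding gp_alt by linarith
    qed
    then have "gp d (p i) x z \<le> B2" using gp_lip[OF piX ztX xX zX] t by linarith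
    moreover have "gp d (p i) x z \<ge> min (gp d (p i) x y) (gp d (p i) y z) - \<delta>"
      using hyp[OF piX xX zX yX] .
    ultimately have "gp d (p i) x y \<le> B2 + \<delta> \<or> gp d (p i) y z \<le> B2 + \<delta>" by linarith
    then show "(\<exists>j\<le>mu. w (p i) (u j) \<le> M*B3+M) \<or> (\<exists>j\<le>mv. w (p i) (v j) \<le> M*B3+M)"
      using near[OF u piX] near[OF v piX] by blast
  qed
qed

lemma wg_split: assumes "wg x y p m" "j \<le> m" shows "w x y = w x (p j) + w (p j) y"
  using wgD(4)[OF assms(1), of 0 m] wgD(4)[OF assms(1), of 0 j] wgD(4)[OF assms(1), of j m]
    wgD(1,2)[OF assms(1)] assms(2) by simp

lemma gpB: assumes "wg x y u mu" "j \<le> mu" "e \<in> X" shows "gp w e x y \<le> w e (u j)"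
proof -
  have xX: "x \<in> X" and yX: "y \<in> X" using wgD(3)[OF assms(1), of 0] wgD(3)[OF assms(1), of mu]
      wgD(1,2)[OF assms(1)] by auto
  have ujX: "u j \<in> X" using wgD(3)[OF assms(1)] assms(2) by simp
  have "w e x \<le> w e (u j) + w (u j) x" "w e y \<le> w e (u j) + w (u j) y" using wtri assms(3) xX yX ujX by auto
  moreover have "w x y = w x (u j) + w (u j) y" using wg_split[OF assms(1,2)] .
  moreover have "w (u j) x = w x (u j)" using wsym ujX xX by auto
  ultimately show ?thesis unfolding gp_alt by linarith
qed

theorem hyperbolic_w: "gromov_hyperbolic X w"
proof -
  obtain C where C0: "C \<ge> 0" and C: "\<forall>x y z p m u mu v mv. wg x z p m \<longrightarrow> wg x y u mu \<longrightarrow> wg y z v mv \<longrightarrow>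
   (\<forall>i\<le>m. (\<exists>j\<le>mu. w (p i) (u j) \<le> C) \<or> (\<exists>j\<le>mv. w (p i) (v j) \<le> C))" using thin by blast
  have main: "gp w e a b \<ge> min (gp w e a c) (gp w e b c) - (3*C+2)"
    if aX: "a \<in> X" and bX: "b \<in> X" and cX: "c \<in> X" and eX: "e \<in> X" for a b c e
  proof -
    obtain p m where p: "wg a b p m" using wg_ex[OF aX bX] by blast
    obtain \<alpha> ma where \<alpha>: "wg a e \<alpha> ma" using wg_ex[OF aX eX] by blast
    obtain \<beta> mb where \<beta>: "wg e b \<beta> mb" using wg_ex[OF eX bX] by blast
    obtain u mu where u: "wg a c u mu" using wg_ex[OF aX cX] by blast
    obtain v mv where v: "wg c b v mv" using wg_ex[OF cX bX] by blast
    note pX = wgD(3)[OF p] and \<alpha>X = wgD(3)[OF \<alpha>] and \<beta>X = wgD(3)[OF \<beta>]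
    have "\<exists>i\<le>m. \<exists>j1\<le>ma. \<exists>j2\<le>mb. w (p i) (\<alpha> j1) \<le> C+1 \<and> w (p i) (\<beta> j2) \<le> C+1"
    proof -
      define S where "S = {i. i \<le> m \<and> (\<exists>j\<le>ma. w (p i) (\<alpha> j) \<le> C)}"
      have fin: "finite S" unfolding S_def by simp
      have "0 \<in> S" unfolding S_def using wgD(1)[OF p] wgD(1)[OF \<alpha>] w0[OF aX] C0 by auto
      then have ne: "S \<noteq> {}" by auto
      define i0 where "i0 = Max S"
      have i0S: "i0 \<in> S" unfolding i0_def using fin ne by (rule Max_in)
      then obtain j1 where j1: "j1 \<le> ma" "w (p i0) (\<alpha> j1) \<le> C" and i0m: "i0 \<le> m" unfolding S_def by auto
      show ?thesis
      proof (cases "i0 = m")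
        case True
        have "w (p i0) (\<beta> mb) = 0" using True wgD(2)[OF p] wgD(2)[OF \<beta>] w0[OF bX] by simp
        then show ?thesis using j1 i0m C0 by (intro exI[of _ i0] conjI exI[of _ j1] exI[of _ mb]) auto
      next
        case False
        then have lt: "Suc i0 \<le> m" using i0m by simp
        have "Suc i0 \<notin> S"
        proof
          assume "Suc i0 \<in> S"
          then have "Suc i0 \<le> i0" unfolding i0_def by (rule Max_ge[OF fin])
          then show False by simp
        qed
        then have "\<not> (\<exists>j\<le>ma. w (p (Suc i0)) (\<alpha> j) \<le> C)" using lt unfolding S_def by auto
        then obtain j2 where j2: "j2 \<le> mb" "w (p (Suc i0)) (\<beta> j2) \<le> C"
          using C[rule_format, OF p \<alpha> \<beta> lt] by blast
        have "w (p i0) (\<beta> j2) \<le> w (p i0) (p (Suc i0)) + w (p (Suc i0)) (\<beta> j2)"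
          using wtri pX \<beta>X lt j2 i0m by simp
        moreover have "w (p i0) (p (Suc i0)) = 1" using wgD(4)[OF p, of i0 "Suc i0"] lt by simp
        ultimately have "w (p i0) (\<beta> j2) \<le> C+1" using j2 by linarith
        then show ?thesis using j1 i0m j2 by (intro exI[of _ i0] conjI exI[of _ j1] exI[of _ j2]) auto
      qed
    qed
    then obtain i j1 j2 where ij: "i \<le> m" "j1 \<le> ma" "j2 \<le> mb" "w (p i) (\<alpha> j1) \<le> C+1" "w (p i) (\<beta> j2) \<le> C+1"
      by blast
    have piX: "p i \<in> X" and ajX: "\<alpha> j1 \<in> X" and bjX: "\<beta> j2 \<in> X" using pX \<alpha>X \<beta>X ij by auto
    have lower: "gp w e a b \<ge> w e (p i) - 2*(C+1)"
    proof -
      have s1: "w a e = w a (\<alpha> j1) + w (\<alpha> j1) e" using wg_split[OF \<alpha> ij(2)] .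
      have s2: "w e b = w e (\<beta> j2) + w (\<beta> j2) b" using wg_split[OF \<beta> ij(3)] .
      have t1: "w a b \<le> w a (\<alpha> j1) + w (\<alpha> j1) b" using wtri aX ajX bX by simp
      have t2: "w (\<alpha> j1) b \<le> w (\<alpha> j1) (p i) + w (p i) b" using wtri ajX piX bX by simp
      have t3: "w (p i) b \<le> w (p i) (\<beta> j2) + w (\<beta> j2) b" using wtri piX bjX bX by simp
      have t4: "w e (p i) \<le> w e (\<alpha> j1) + w (\<alpha> j1) (p i)" using wtri eX ajX piX by simp
      have t5: "w e (p i) \<le> w e (\<beta> j2) + w (\<beta> j2) (p i)" using wtri eX bjX piX by simp
      have sy: "w (\<alpha> j1) (p i) = w (p i) (\<alpha> j1)" "w (\<beta> j2) (p i) = w (p i) (\<beta> j2)"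
        "w e a = w a e" "w (\<alpha> j1) e = w e (\<alpha> j1)"
        using wsym piX ajX bjX eX aX by auto
      have g2: "2 * gp w e a b = w e a + w e b - w a b" by (simp add: gp_def)
      show ?thesis using g2 s1 s2 t1 t2 t3 t4 t5 sy ij(4,5) by (smt (verit))
    qed
    have "(\<exists>j\<le>mu. w (p i) (u j) \<le> C) \<or> (\<exists>j\<le>mv. w (p i) (v j) \<le> C)"
      using C[rule_format, OF p u v ij(1)] .
    then have "min (gp w e a c) (gp w e b c) \<le> w e (p i) + C"
    proof
      assume "\<exists>j\<le>mu. w (p i) (u j) \<le> C"
      then obtain j where j: "j \<le> mu" "w (p i) (u j) \<le> C" by blast
      have ujX: "u j \<in> X" using wgD(3)[OF u] j by simp
      have "gp w e a c \<le> w e (u j)" using gpB[OF u j(1) eX] .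
      moreover have "w e (u j) \<le> w e (p i) + w (p i) (u j)" using wtri eX piX ujX by simp
      ultimately show ?thesis using j by linarith
    next
      assume "\<exists>j\<le>mv. w (p i) (v j) \<le> C"
      then obtain j where j: "j \<le> mv" "w (p i) (v j) \<le> C" by blast
      have vjX: "v j \<in> X" using wgD(3)[OF v] j by simp
      have "gp w e c b \<le> w e (v j)" using gpB[OF v j(1) eX] .
      moreover have "gp w e b c = gp w e c b" unfolding gp_alt using wsym bX cX by simp
      moreover have "w e (v j) \<le> w e (p i) + w (p i) (v j)" using wtri eX piX vjX by simp
      ultimately show ?thesis using j by linarith
    qed
    then show ?thesis using lower by (smt (verit))
  qed
  show ?thesis unfolding gromov_hyperbolic_def
  proof (intro exI[of _ "3*C+2"] ballI)
    fix x y z e assume "x \<in> X" "y \<in> X" "z \<in> X" "e \<in> X"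
    from main[OF this] show "min ((w e x + w e z - w x z) / 2) ((w e y + w e z - w y z) / 2) - (3 * C + 2)
       \<le> (w e x + w e y - w x y) / 2" unfolding gp_def .
  qed
qed

end


definition conc :: "(nat \<Rightarrow> 'b::zero) \<Rightarrow> bool" where
  "conc a \<longleftrightarrow> (\<forall>k. k \<noteq> 1 \<longrightarrow> a k = 0)"

lemma lex_conc:
  fixes a b :: "nat \<Rightarrow> 'b::{linorder,zero}"
  assumes "conc a" "conc b"
  shows "lex_le a b \<longleftrightarrow> a 1 \<le> b 1"
proof
  assume "lex_le a b"
  then consider "a = b" | j where "a j < b j" "\<forall>k>j. a k = b k" unfolding lex_le_def lex_less_def by blast
  then show "a 1 \<le> b 1"
  proof cases
    case 1 then show ?thesis by simp
  next
    case 2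
    show ?thesis
    proof (cases "j = 1")
      case True then show ?thesis using 2 by simp
    next
      case False
      then have "a j = 0" "b j = 0" using assms unfolding conc_def by auto
      then have "j = 0" using 2 by auto
      then show ?thesis using 2 by simp
    qed
  qed
next
  assume h: "a 1 \<le> b 1"
  show "lex_le a b"
  proof (cases "a 1 = b 1")
    case True
    then have "a = b" using assms unfolding conc_def by (metis ext)
    then show ?thesis unfolding lex_le_def by simp
  next
    case False
    then have "a 1 < b 1" using h by simp
    moreover have "\<forall>k>1. a k = b k" using assms unfolding conc_def by simp
    ultimately show ?thesis unfolding lex_le_def lex_less_def by blast
  qed
qed

lemma conc_ht: assumes "zn_vec n a" "ht a \<le> 1" shows "conc a"
  unfolding conc_def
proof (intro allI impI)
  fix k :: nat assume k: "k \<noteq> 1"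
  have zv: "\<And>i. a i \<noteq> 0 \<Longrightarrow> 1 \<le> i \<and> i \<le> n"
  proof -
    fix i assume "a i \<noteq> 0"
    then have "\<not> (i < 1 \<or> n < i)" using assms(1) unfolding zn_vec_def by blast
    then show "1 \<le> i \<and> i \<le> n" by simp
  qed
  show "a k = 0"
  proof (rule ccontr)
    assume nz: "a k \<noteq> 0"
    have "{k. a k \<noteq> 0} \<subseteq> {1..n}" using zv by auto
    then have fin: "finite {k. a k \<noteq> 0}" by (rule finite_subset) simp
    have "k \<le> Max {k. a k \<noteq> 0}" using nz fin by (intro Max_ge) auto
    moreover have "ht a = Max {k. a k \<noteq> 0}" unfolding ht_def using nz by auto
    ultimately have "k \<le> 1" using assms(2) by simp
    moreover have "k \<ge> 1" using zv[OF nz] by simp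
    ultimately show False using k by simp
  qed
qed

lemma ht_conc: assumes "conc a" shows "ht a \<le> 1"
proof (cases "\<exists>k. a k \<noteq> 0")
  case True
  have sub: "{k. a k \<noteq> 0} \<subseteq> {1}" using assms unfolding conc_def by auto
  then have fin: "finite {k. a k \<noteq> 0}" by (rule finite_subset) simp
  have "Max {k. a k \<noteq> 0} \<le> 1" using True fin sub by (intro Max.boundedI) auto
  then show ?thesis unfolding ht_def using True by simp
next
  case False then show ?thesis unfolding ht_def by simp
qed

locale lfs =
  fixes G :: "('a,'c) monoid_scheme" (structure) and n :: nat and l :: "'a \<Rightarrow> nat \<Rightarrow> int"
    and \<delta> :: "nat \<Rightarrow> int" and H :: "'a set"
  assumes grp: "group G" and lf: "length_function G n l" and hypl: "hyperbolic_lf G l \<delta>"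
    and regl: "regular_lf G l \<delta>" and propl: "proper_lf G l" and zd: "zn_vec n \<delta>" and htd: "ht \<delta> = 1"
    and H_def: "H = {g \<in> carrier G. ht (l g) \<le> 1}" and sub: "subgroup H G"
begin

sublocale group G by (rule grp)

lemma HG: "g \<in> H \<Longrightarrow> g \<in> carrier G" using H_def by auto
lemma H1: "\<one> \<in> H" using sub by (rule subgroup.one_closed)
lemma Hm: "g \<in> H \<Longrightarrow> h \<in> H \<Longrightarrow> g \<otimes> h \<in> H" using sub by (rule subgroup.m_closed)
lemma Hi: "g \<in> H \<Longrightarrow> inv g \<in> H" using sub by (rule subgroup.m_inv_closed)

lemma lconc: "g \<in> H \<Longrightarrow> conc (l g)"
  using lf H_def conc_ht unfolding length_function_def by auto

lemma l1: "l \<one> = (\<lambda>i. 0)" using lf unfolding length_function_def by simp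
lemma linv: "g \<in> carrier G \<Longrightarrow> l (inv g) = l g" using lf unfolding length_function_def by simp
lemma lnn: "g \<in> H \<Longrightarrow> 0 \<le> l g 1"
proof -
  assume g: "g \<in> H"
  have "lex_le (\<lambda>i. 0) (l g)" using lf HG[OF g] unfolding length_function_def by simp
  moreover have "conc (\<lambda>i::nat. 0::int)" unfolding conc_def by simp
  ultimately show ?thesis using lex_conc lconc[OF g] by fastforce
qed
lemma ltri: "g \<in> H \<Longrightarrow> h \<in> H \<Longrightarrow> l (g \<otimes> h) 1 \<le> l g 1 + l h 1"
proof -
  assume g: "g \<in> H" and h: "h \<in> H"
  have "lex_le (l (g \<otimes> h)) (\<lambda>i. l g i + l h i)" using lf HG[OF g] HG[OF h] unfolding length_function_def by simp
  moreover have "conc (\<lambda>i. l g i + l h i)" using lconc[OF g] lconc[OF h] unfolding conc_def by simp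
  ultimately show ?thesis using lex_conc lconc[OF Hm[OF g h]] by fastforce
qed

definition D :: "'a \<Rightarrow> 'a \<Rightarrow> int" where "D x y = l (inv x \<otimes> y) 1"

lemma D_inv: "x \<in> carrier G \<Longrightarrow> y \<in> carrier G \<Longrightarrow> inv (inv x \<otimes> y) = inv y \<otimes> x"
  by (simp add: inv_mult_group)

lemma D0: "x \<in> carrier G \<Longrightarrow> D x x = 0" unfolding D_def using l1 by simp
lemma Dsym: "x \<in> carrier G \<Longrightarrow> y \<in> carrier G \<Longrightarrow> D x y = D y x"
  unfolding D_def by (metis D_inv inv_closed linv m_closed)
lemma Dtri: "x \<in> H \<Longrightarrow> y \<in> H \<Longrightarrow> z \<in> H \<Longrightarrow> D x z \<le> D x y + D y z"
proof -
  assume x: "x \<in> H" and y: "y \<in> H" and z: "z \<in> H"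
  have "inv x \<otimes> z = (inv x \<otimes> y) \<otimes> (inv y \<otimes> z)" using HG x y z
    by (simp add: m_assoc[symmetric]) (simp add: m_assoc)
  then show ?thesis unfolding D_def using ltri Hm Hi x y z by metis
qed
lemma Dnn: "x \<in> H \<Longrightarrow> y \<in> H \<Longrightarrow> 0 \<le> D x y" unfolding D_def using lnn Hm Hi by simp
lemma D1: "x \<in> carrier G \<Longrightarrow> D \<one> x = l x 1" unfolding D_def by simp
lemma Dleft: "a \<in> carrier G \<Longrightarrow> x \<in> carrier G \<Longrightarrow> y \<in> carrier G \<Longrightarrow> D (a \<otimes> x) (a \<otimes> y) = D x y"
proof -
  assume a: "a \<in> carrier G" and x: "x \<in> carrier G" and y: "y \<in> carrier G"
  have "inv (a \<otimes> x) \<otimes> (a \<otimes> y) = inv x \<otimes> y" using a x y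
    by (simp add: inv_mult_group m_assoc[symmetric]) (simp add: m_assoc)
  then show ?thesis unfolding D_def by simp
qed

end


lemma lexmin_conc:
  fixes a b :: "nat \<Rightarrow> 'b::{linorder,zero}"
  assumes "conc a" "conc b" shows "lex_min a b 1 = min (a 1) (b 1)" "conc (lex_min a b)"
  using assms lex_conc[OF assms] unfolding lex_min_def conc_def by (auto simp: min_def)

context lfs begin

lemma gprod_conc: "g \<in> H \<Longrightarrow> h \<in> H \<Longrightarrow> conc (gprod G l g h)"
  unfolding conc_def gprod_def using lconc[of g] lconc[of h] lconc[OF Hm[OF Hi]] unfolding conc_def
  by simp

lemma gprod1: "gprod G l g h 1 = (of_int (l g 1) + of_int (l h 1) - of_int (D g h)) / 2"
  unfolding gprod_def D_def by simp

lemma \<delta>conc: "conc \<delta>" using conc_ht[OF zd] htd by simp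

definition dR :: "'a \<Rightarrow> 'a \<Rightarrow> real" where "dR x y = real_of_int (D x y)"

lemma hyp1: assumes f: "f \<in> H" and g: "g \<in> H" and h: "h \<in> H"
  shows "gp dR \<one> f g \<ge> min (gp dR \<one> f h) (gp dR \<one> g h) - real_of_int (\<delta> 1)"
proof -
  let ?A = "gprod G l f h" and ?B = "gprod G l g h" and ?C = "gprod G l f g"
  have cA: "conc ?A" and cB: "conc ?B" and cC: "conc ?C" using gprod_conc f g h by auto
  have cv: "conc (\<lambda>i. lex_min ?A ?B i - of_int (\<delta> i))"
    using lexmin_conc(2)[OF cA cB] \<delta>conc unfolding conc_def by simp
  have "lex_le (\<lambda>i. lex_min ?A ?B i - of_int (\<delta> i)) ?C"
    using hypl f g h HG unfolding hyperbolic_lf_def by blast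
  then have "lex_min ?A ?B 1 - of_int (\<delta> 1) \<le> ?C 1" using lex_conc[OF cv cC] by simp
  then have q: "min (?A 1) (?B 1) - of_int (\<delta> 1) \<le> ?C 1" using lexmin_conc(1)[OF cA cB] by simp
  have om: "real_of_rat (min a b) = min (real_of_rat a) (real_of_rat b)" for a b
    by (simp add: min_def of_rat_less_eq)
  have "real_of_rat (min (?A 1) (?B 1) - of_int (\<delta> 1)) \<le> real_of_rat (?C 1)"
    using q by (simp only: of_rat_less_eq)
  then have "min (real_of_rat (?A 1)) (real_of_rat (?B 1)) - real_of_int (\<delta> 1) \<le> real_of_rat (?C 1)"
    by (simp add: of_rat_diff om)
  moreover have "real_of_rat (gprod G l x y 1) = gp dR \<one> x y" if "x \<in> H" "y \<in> H" for x y
    unfolding gprod1 gp_def dR_def using D1 HG that by (simp add: of_rat_divide of_rat_add of_rat_diff)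
  ultimately show ?thesis using f g h by simp
qed

lemma gp_shift: assumes e: "e \<in> H" and x: "x \<in> H" and y: "y \<in> H"
  shows "gp dR e x y = gp dR \<one> (inv e \<otimes> x) (inv e \<otimes> y)"
proof -
  have "D e z = D \<one> (inv e \<otimes> z)" if "z \<in> H" for z
    using Dleft[of "inv e" e z] HG e that by simp
  moreover have "D x y = D (inv e \<otimes> x) (inv e \<otimes> y)" using Dleft[of "inv e" x y] HG e x y by simp
  ultimately show ?thesis unfolding gp_def dR_def using x y by simp
qed

lemma hypH: assumes "e \<in> H" "x \<in> H" "y \<in> H" "z \<in> H"
  shows "gp dR e x y \<ge> min (gp dR e x z) (gp dR e z y) - real_of_int \<bar>\<delta> 1\<bar>"
proof -
  let ?x = "inv e \<otimes> x" and ?y = "inv e \<otimes> y" and ?z = "inv e \<otimes> z"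
  have X: "?x \<in> H" "?y \<in> H" "?z \<in> H" using assms Hm Hi by auto
  have "gp dR \<one> ?x ?y \<ge> min (gp dR \<one> ?x ?z) (gp dR \<one> ?y ?z) - real_of_int (\<delta> 1)"
    using hyp1[OF X(1,2,3)] .
  moreover have "gp dR e z y = gp dR e y z" unfolding gp_def dR_def using Dsym HG assms by simp
  ultimately show ?thesis using gp_shift assms by simp
qed

end

context lfs begin

abbreviation "G1 \<equiv> G\<lparr>carrier := H\<rparr>"

definition prodl :: "'a list \<Rightarrow> 'a" where "prodl xs = foldr (\<lambda>x y. x \<otimes> y) xs \<one>"

lemma prodl_Nil[simp]: "prodl [] = \<one>" unfolding prodl_def by simp
lemma prodl_Cons[simp]: "prodl (x # xs) = x \<otimes> prodl xs" unfolding prodl_def by simp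
lemma prodl_closed: "set xs \<subseteq> carrier G \<Longrightarrow> prodl xs \<in> carrier G" by (induction xs) auto
lemma prodl_H: "set xs \<subseteq> H \<Longrightarrow> prodl xs \<in> H" by (induction xs) (auto simp: H1 Hm)
lemma prodl_append: "set xs \<subseteq> carrier G \<Longrightarrow> set ys \<subseteq> carrier G \<Longrightarrow> prodl (xs @ ys) = prodl xs \<otimes> prodl ys"
  by (induction xs) (auto simp: prodl_closed m_assoc)
lemma prodl_rev_inv: "set xs \<subseteq> carrier G \<Longrightarrow> prodl (rev (map (\<lambda>x. inv x) xs)) = inv (prodl xs)"
proof (induction xs)
  case Nil then show ?case by simp
next
  case (Cons x xs)
  have "prodl (rev (map (\<lambda>x. inv x) (x # xs))) = prodl (rev (map (\<lambda>x. inv x) xs) @ [inv x])" by simp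
  also have "\<dots> = prodl (rev (map (\<lambda>x. inv x) xs)) \<otimes> prodl [inv x]" using Cons.prems
    by (intro prodl_append) auto
  also have "\<dots> = inv (prodl xs) \<otimes> inv x" using Cons by simp
  also have "\<dots> = inv (x \<otimes> prodl xs)" using Cons.prems prodl_closed by (simp add: inv_mult_group)
  finally show ?case by simp
qed

definition A :: "'a set \<Rightarrow> 'a set" where "A S = S \<union> (\<lambda>s. inv s) ` S"

lemma A_H: "S \<subseteq> H \<Longrightarrow> A S \<subseteq> H" unfolding A_def using Hi by auto
lemma A_inv: "S \<subseteq> H \<Longrightarrow> x \<in> A S \<Longrightarrow> inv x \<in> A S" unfolding A_def using HG by auto

lemma words: assumes S: "S \<subseteq> H" and g: "g \<in> generate G1 S"
  shows "\<exists>xs. set xs \<subseteq> A S \<and> prodl xs = g"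
  using g
proof (induction rule: generate.induct)
  case one
  show ?case by (intro exI[of _ "[]"]) simp
next
  case (incl h)
  then show ?case using HG S by (intro exI[of _ "[h]"]) (auto simp: A_def)
next
  case (inv h)
  have "inv\<^bsub>G1\<^esub> h = inv h" using m_inv_consistent[OF sub] inv S by auto
  then show ?case using inv HG S by (intro exI[of _ "[inv h]"]) (auto simp: A_def)
next
  case (eng h1 h2)
  then obtain xs ys where "set xs \<subseteq> A S" "prodl xs = h1" "set ys \<subseteq> A S" "prodl ys = h2" by blast
  moreover have "A S \<subseteq> carrier G" using A_H[OF S] HG by auto
  ultimately show ?case by (intro exI[of _ "xs @ ys"]) (auto simp: prodl_append)
qed

definition WL :: "'a set \<Rightarrow> 'a \<Rightarrow> nat" where
  "WL S g = (LEAST k. \<exists>xs. length xs = k \<and> set xs \<subseteq> A S \<and> prodl xs = g)"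

lemma WL_eq: assumes S: "S \<subseteq> H" shows "word_length G1 S g = WL S g"
proof -
  have "(\<lambda>s. inv\<^bsub>G1\<^esub> s) ` S = (\<lambda>s. inv s) ` S" using m_inv_consistent[OF sub] S by (intro image_cong) auto
  moreover have "foldr (\<lambda>x y. x \<otimes>\<^bsub>G1\<^esub> y) xs \<one>\<^bsub>G1\<^esub> = prodl xs" for xs
    unfolding prodl_def by simp
  ultimately show ?thesis unfolding word_length_def WL_def A_def by simp
qed

lemma WL_le: "set xs \<subseteq> A S \<Longrightarrow> prodl xs = g \<Longrightarrow> WL S g \<le> length xs"
  unfolding WL_def by (rule Least_le) blast

lemma WL_ex: assumes "\<exists>xs. set xs \<subseteq> A S \<and> prodl xs = g"
  shows "\<exists>xs. length xs = WL S g \<and> set xs \<subseteq> A S \<and> prodl xs = g"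
proof -
  from assms obtain xs where "set xs \<subseteq> A S \<and> prodl xs = g" by blast
  then have "\<exists>k xs. length xs = k \<and> set xs \<subseteq> A S \<and> prodl xs = g" by blast
  then show ?thesis unfolding WL_def by (rule LeastI_ex)
qed

abbreviation gen :: "'a set \<Rightarrow> bool" where "gen S \<equiv> finite S \<and> S \<subseteq> H \<and> generate G1 S = H"

lemma WL_word: assumes "gen S" "g \<in> H"
  shows "\<exists>xs. length xs = WL S g \<and> set xs \<subseteq> A S \<and> prodl xs = g"
proof -
  have S: "S \<subseteq> H" and g: "g \<in> generate G1 S" using assms by auto
  show ?thesis by (rule WL_ex[OF words[OF S g]])
qed

lemma WL_one: "WL S \<one> = 0" using WL_le[of "[]" S \<one>] by simp

lemma WL_mult: assumes "gen S" "g \<in> H" "h \<in> H" shows "WL S (g \<otimes> h) \<le> WL S g + WL S h"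
proof -
  obtain xs where xs: "length xs = WL S g" "set xs \<subseteq> A S" "prodl xs = g" using WL_word assms by blast
  obtain ys where ys: "length ys = WL S h" "set ys \<subseteq> A S" "prodl ys = h" using WL_word assms by blast
  have AG: "A S \<subseteq> carrier G" using A_H assms HG by blast
  have "prodl (xs @ ys) = g \<otimes> h" using xs ys AG by (simp add: prodl_append)
  then have "WL S (g \<otimes> h) \<le> length (xs @ ys)" using xs ys by (intro WL_le) auto
  then show ?thesis using xs ys by simp
qed

lemma WL_inv_le: assumes "gen S" "g \<in> H" shows "WL S (inv g) \<le> WL S g"
proof -
  obtain xs where xs: "length xs = WL S g" "set xs \<subseteq> A S" "prodl xs = g" using WL_word assms by blast
  have AG: "A S \<subseteq> carrier G" using A_H assms HG by blast
  have "prodl (rev (map (\<lambda>x. inv x) xs)) = inv g" using xs AG by (simp add: prodl_rev_inv)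
  moreover have "set (rev (map (\<lambda>x. inv x) xs)) \<subseteq> A S" using xs A_inv assms by auto
  ultimately have "WL S (inv g) \<le> length (rev (map (\<lambda>x. inv x) xs))" by (intro WL_le)
  then show ?thesis using xs by simp
qed

lemma WL_inv: assumes "gen S" "g \<in> H" shows "WL S (inv g) = WL S g"
  using WL_inv_le[OF assms] WL_inv_le[OF assms(1) Hi[OF assms(2)]] assms HG by simp

definition LS :: "'a set \<Rightarrow> int" where "LS S = Max (insert 0 ((\<lambda>s. l s 1) ` S))"

lemma LS0: "finite S \<Longrightarrow> LS S \<ge> 0" unfolding LS_def by simp
lemma LS_A: assumes "finite S" "S \<subseteq> H" "x \<in> A S" shows "l x 1 \<le> LS S"
proof -
  have "l s 1 \<le> LS S" if "s \<in> S" for s unfolding LS_def using assms(1) that by (intro Max_ge) auto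
  then show ?thesis using assms linv HG unfolding A_def by auto
qed

lemma l_prodl: assumes "finite S" "S \<subseteq> H" "set xs \<subseteq> A S" shows "l (prodl xs) 1 \<le> LS S * length xs"
  using assms(3)
proof (induction xs)
  case Nil then show ?case using l1 by simp
next
  case (Cons x xs)
  have AH: "A S \<subseteq> H" using A_H assms(2) .
  have xH: "x \<in> H" using Cons.prems AH by auto
  have "set xs \<subseteq> H" using Cons.prems AH by auto
  then have "l (x \<otimes> prodl xs) 1 \<le> l x 1 + l (prodl xs) 1" using ltri xH prodl_H by blast
  moreover have "l x 1 \<le> LS S" using LS_A assms Cons.prems by auto
  ultimately show ?case using Cons by (simp add: algebra_simps)
qed

end

context lfs begin

lemma Dg1: "g \<in> carrier G \<Longrightarrow> D g \<one> = l g 1"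
  unfolding D_def using linv by simp

lemma split: assumes S: "gen S" and g: "g \<in> H" and big: "l g 1 > LS S"
  shows "\<exists>a b. a \<in> H \<and> b \<in> H \<and> g = a \<otimes> b \<and> 0 < l a 1 \<and> l a 1 \<le> LS S \<and> l g 1 = l a 1 + l b 1"
proof -
  define c where "c h = l g 1 + l h 1 - D g h" for h
  have AH: "A S \<subseteq> H" using A_H S by blast
  have gG: "g \<in> carrier G" using HG g by simp
  have claim: "set ys \<subseteq> A S \<Longrightarrow> 0 < c (prodl ys) \<Longrightarrow> (\<exists>h\<in>H. 0 < c h \<and> c h \<le> 2 * LS S)" for ys
  proof (induction ys rule: rev_induct)
    case Nil
    have "c \<one> = 0" unfolding c_def using Dg1[OF gG] l1 by simp
    then show ?case using Nil by simp
  next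
    case (snoc x ys)
    have yH: "set ys \<subseteq> H" and xH: "x \<in> H" using snoc.prems AH by auto
    have hy: "prodl ys \<in> H" using prodl_H[OF yH] .
    have "prodl (ys @ [x]) = prodl ys \<otimes> prodl [x]" using yH xH HG by (intro prodl_append) auto
    also have "\<dots> = prodl ys \<otimes> x" using xH HG by simp
    finally have pe: "prodl (ys @ [x]) = prodl ys \<otimes> x" .
    show ?case
    proof (cases "0 < c (prodl ys)")
      case True then show ?thesis using snoc by auto
    next
      case False
      let ?h = "prodl ys"
      have hxH: "?h \<otimes> x \<in> H" using Hm hy xH by simp
      have 1: "l (?h \<otimes> x) 1 \<le> l ?h 1 + l x 1" using ltri hy xH by simp
      have 2: "D g ?h \<le> D g (?h \<otimes> x) + D (?h \<otimes> x) ?h" using Dtri g hxH hy by simp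
      have "D (?h \<otimes> x) ?h = D (?h \<otimes> \<one>) (?h \<otimes> x)" using Dsym HG hy xH hxH by simp
      also have "\<dots> = D \<one> x" using Dleft[of "?h" "\<one>" x] HG hy xH by simp
      also have "\<dots> = l x 1" using D1 HG xH by simp
      finally have 3: "D (?h \<otimes> x) ?h = l x 1" .
      have 4: "l x 1 \<le> LS S" using LS_A S snoc.prems by auto
      have "c (?h \<otimes> x) \<le> 2 * LS S" using False 1 2 3 4 unfolding c_def by linarith
      moreover have "0 < c (?h \<otimes> x)" using snoc.prems pe by simp
      ultimately show ?thesis using hxH by blast
    qed
  qed
  obtain xs where xs: "set xs \<subseteq> A S" "prodl xs = g" using words S g by blast
  have LS0': "LS S \<ge> 0" using LS0 S by simp
  have "c g = 2 * l g 1" unfolding c_def using D0 gG by simp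
  then have "0 < c (prodl xs)" using xs big LS0' by simp
  then obtain h where h: "h \<in> H" "0 < c h" "c h \<le> 2 * LS S" using claim xs by blast
  have hG: "h \<in> carrier G" using HG h by simp
  obtain gc hc gd hd where gc: "gc \<in> carrier G" "gd \<in> carrier G"
    and eq: "(\<lambda>i. of_int (l gc i)) = gprod G l g h" and gdec: "g = gc \<otimes> gd"
    and lg: "l g = (\<lambda>i. l gc i + l gd i)"
    using regl gG hG unfolding regular_lf_def by blast
  have "of_int (l gc 1) = gprod G l g h 1" using fun_cong[OF eq, of 1] by simp
  then have "(of_int (l gc 1) :: rat) = (of_int (l g 1) + of_int (l h 1) - of_int (D g h)) / 2"
    using gprod1 by simp
  then have "(of_int (2 * l gc 1) :: rat) = of_int (c h)" unfolding c_def by (simp add: field_simps)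
  then have gc1: "2 * l gc 1 = c h" by (simp only: of_int_eq_iff)
  have "conc (l gc)"
    unfolding conc_def
  proof (intro allI impI)
    fix k :: nat assume "k \<noteq> 1"
    then have "gprod G l g h k = 0" using gprod_conc[OF g h(1)] unfolding conc_def by simp
    then have "(of_int (l gc k) :: rat) = 0" using fun_cong[OF eq, of k] by simp
    then show "l gc k = 0" by simp
  qed
  then have gcH: "gc \<in> H" using ht_conc gc H_def by auto
  have "gd = inv gc \<otimes> g" using gdec gc by (simp add: m_assoc[symmetric])
  then have gdH: "gd \<in> H" using Hm Hi gcH g by simp
  have "l g 1 = l gc 1 + l gd 1" using fun_cong[OF lg, of 1] by simp
  then show ?thesis using gcH gdH gdec gc1 h by (intro exI[of _ gc] exI[of _ gd]) auto
qed

definition chain1 where "chain1 S g z N \<longleftrightarrow> z 0 = \<one> \<and> z N = g \<and> (\<forall>t\<le>N. z t \<in> H) \<and>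
   (\<forall>s t u. s\<le>t \<longrightarrow> t\<le>u \<longrightarrow> u\<le>N \<longrightarrow> D (z s) (z u) = D (z s) (z t) + D (z t) (z u)) \<and>
   (\<forall>t<N. D (z t) (z (Suc t)) \<le> LS S)"

lemma cg1: assumes S: "gen S" and g: "g \<in> H" shows "\<exists>N z. chain1 S g z N"
  using g
proof (induction "nat (l g 1)" arbitrary: g rule: less_induct)
  case less
  have gG: "g \<in> carrier G" using HG less.prems by simp
  show ?case
  proof (cases "l g 1 \<le> LS S")
    case True
    define z where "z t = (if t = 0 then \<one> else g)" for t :: nat
    have "chain1 S g z 1" unfolding chain1_def
    proof (intro conjI allI impI)
      fix s t u :: nat assume "s \<le> t" "t \<le> u" "u \<le> 1"
      then show "D (z s) (z u) = D (z s) (z t) + D (z t) (z u)"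
        unfolding z_def using D0 gG by (cases s; cases t; cases u) auto
    next
      fix t :: nat assume "t < 1"
      then show "D (z t) (z (Suc t)) \<le> LS S" unfolding z_def using D1 gG True by simp
    qed (auto simp: z_def less.prems H1)
    then show ?thesis by blast
  next
    case False
    then obtain a b where ab: "a \<in> H" "b \<in> H" "g = a \<otimes> b" "0 < l a 1" "l a 1 \<le> LS S"
      "l g 1 = l a 1 + l b 1" using split[OF S less.prems] by auto
    have aG: "a \<in> carrier G" and bG: "b \<in> carrier G" using HG ab by auto
    have "nat (l b 1) < nat (l g 1)" using ab lnn[of b] by simp
    then obtain N zb where zb: "chain1 S b zb N" using less.hyps ab(2) by blast
    have zb0: "zb 0 = \<one>" and zbN: "zb N = b" and zbH: "\<And>t. t \<le> N \<Longrightarrow> zb t \<in> H"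
      and zbex: "\<And>s t u. s\<le>t \<Longrightarrow> t\<le>u \<Longrightarrow> u\<le>N \<Longrightarrow> D (zb s) (zb u) = D (zb s) (zb t) + D (zb t) (zb u)"
      and zbgap: "\<And>t. t<N \<Longrightarrow> D (zb t) (zb (Suc t)) \<le> LS S"
      using zb unfolding chain1_def by blast+
    have zbG: "\<And>t. t \<le> N \<Longrightarrow> zb t \<in> carrier G" using zbH HG by blast
    have key: "D \<one> (a \<otimes> zb r) = l a 1 + D \<one> (zb r)" if r: "r \<le> N" for r
    proof -
      have azH: "a \<otimes> zb r \<in> H" using Hm ab zbH r by simp
      have "D \<one> (a \<otimes> zb r) \<le> D \<one> a + D a (a \<otimes> zb r)" using Dtri H1 ab azH by simp
      moreover have "D a (a \<otimes> zb r) = D \<one> (zb r)" using Dleft[of a \<one> "zb r"] aG zbG r by simp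
      moreover have "D \<one> a = l a 1" using D1 aG by simp
      moreover have "D \<one> g \<le> D \<one> (a \<otimes> zb r) + D (a \<otimes> zb r) g" using Dtri H1 azH less.prems by simp
      moreover have "D (a \<otimes> zb r) g = D (zb r) b" using Dleft[of a "zb r" b] aG bG zbG r ab by simp
      moreover have "D \<one> b = D \<one> (zb r) + D (zb r) b" using zbex[of 0 r N] r zb0 zbN by simp
      moreover have "D \<one> g = l g 1" "D \<one> b = l b 1" using D1 gG bG by auto
      ultimately show ?thesis using ab by linarith
    qed
    define z where "z t = (if t = 0 then \<one> else a \<otimes> zb (t - 1))" for t
    have "chain1 S g z (Suc N)" unfolding chain1_def
    proof (intro conjI allI impI)
      show "z 0 = \<one>" unfolding z_def by simp
      show "z (Suc N) = g" unfolding z_def using zbN ab by simp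
    next
      fix t assume "t \<le> Suc N"
      then show "z t \<in> H" unfolding z_def using H1 Hm ab zbH by auto
    next
      fix s t u assume stu: "s \<le> t" "t \<le> u" "u \<le> Suc N"
      show "D (z s) (z u) = D (z s) (z t) + D (z t) (z u)"
      proof (cases "s = 0")
        case s0: True
        show ?thesis
        proof (cases "t = 0")
          case True then show ?thesis using s0 unfolding z_def using D0 by simp
        next
          case t0: False
          then have u0: "u \<noteq> 0" using stu by simp
          have "D (a \<otimes> zb (t-1)) (a \<otimes> zb (u-1)) = D (zb (t-1)) (zb (u-1))"
            using Dleft aG zbG stu by simp
          moreover have "D \<one> (zb (u-1)) = D \<one> (zb (t-1)) + D (zb (t-1)) (zb (u-1))"
            using zbex[of 0 "t-1" "u-1"] stu zb0 by simp
          ultimately show ?thesis using s0 t0 u0 key[of "t-1"] key[of "u-1"] stu unfolding z_def by simp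
        qed
      next
        case False
        then have "t \<noteq> 0" "u \<noteq> 0" using stu by auto
        then show ?thesis using False Dleft aG zbG stu zbex[of "s-1" "t-1" "u-1"] unfolding z_def by simp
      qed
    next
      fix t assume t: "t < Suc N"
      show "D (z t) (z (Suc t)) \<le> LS S"
      proof (cases "t = 0")
        case True
        then show ?thesis unfolding z_def using zb0 aG D1 ab by simp
      next
        case False
        then show ?thesis unfolding z_def using Dleft aG zbG t zbgap[of "t-1"] by simp
      qed
    qed
    then show ?thesis by blast
  qed
qed

end

context lfs begin

definition wS :: "'a set \<Rightarrow> 'a \<Rightarrow> 'a \<Rightarrow> real" where "wS S x y = real (WL S (inv x \<otimes> y))"

lemma invmul: "a \<in> carrier G \<Longrightarrow> b \<in> carrier G \<Longrightarrow> c \<in> carrier G \<Longrightarrow> inv (a \<otimes> b) \<otimes> (a \<otimes> c) = inv b \<otimes> c"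
  by (simp add: inv_mult_group m_assoc[symmetric]) (simp add: m_assoc)

lemma w0: "x \<in> H \<Longrightarrow> wS S x x = 0" unfolding wS_def using WL_one HG by simp
lemma wsym: "gen S \<Longrightarrow> x \<in> H \<Longrightarrow> y \<in> H \<Longrightarrow> wS S x y = wS S y x"
  unfolding wS_def using WL_inv[of S "inv x \<otimes> y"] Hm Hi HG by (simp add: D_inv)
lemma wtri: assumes "gen S" "x \<in> H" "y \<in> H" "z \<in> H" shows "wS S x z \<le> wS S x y + wS S y z"
proof -
  have "inv x \<otimes> z = (inv x \<otimes> y) \<otimes> (inv y \<otimes> z)" using HG assms
    by (simp add: m_assoc[symmetric]) (simp add: m_assoc)
  then show ?thesis unfolding wS_def using WL_mult[OF assms(1), of "inv x \<otimes> y" "inv y \<otimes> z"] Hm Hi assms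
    by simp
qed

lemma dw: assumes "gen S" "x \<in> H" "y \<in> H" shows "dR x y \<le> real_of_int (LS S) * wS S x y"
proof -
  obtain xs where xs: "length xs = WL S (inv x \<otimes> y)" "set xs \<subseteq> A S" "prodl xs = inv x \<otimes> y"
    using WL_word[OF assms(1), of "inv x \<otimes> y"] Hm[OF Hi[OF assms(2)] assms(3)] by blast
  have "l (prodl xs) 1 \<le> LS S * length xs" using l_prodl[of S xs] assms(1) xs(2) by simp
  then have "D x y \<le> LS S * int (WL S (inv x \<otimes> y))" unfolding D_def using xs by simp
  then have "real_of_int (D x y) \<le> real_of_int (LS S * int (WL S (inv x \<otimes> y)))" by (simp only: of_int_le_iff)
  then show ?thesis unfolding dR_def wS_def by simp
qed

lemma wgeod: assumes S: "gen S" and x: "x \<in> H" and y: "y \<in> H"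
  shows "\<exists>p m. p 0 = x \<and> p m = y \<and> (\<forall>i\<le>m. p i \<in> H) \<and> (\<forall>i\<le>m. \<forall>j\<le>m. wS S (p i) (p j) = \<bar>real i - real j\<bar>)"
proof -
  let ?g = "inv x \<otimes> y"
  obtain xs where xs: "length xs = WL S ?g" "set xs \<subseteq> A S" "prodl xs = ?g"
    using WL_word[OF S, of ?g] Hm[OF Hi[OF x] y] by blast
  define m where "m = length xs"
  define p where "p i = x \<otimes> prodl (take i xs)" for i
  have xsH: "set xs \<subseteq> H" using xs A_H S by blast
  have xsG: "set xs \<subseteq> carrier G" using xsH HG by blast
  have xG: "x \<in> carrier G" using HG x by simp
  have sH: "set (take i xs) \<subseteq> H" "set (drop i xs) \<subseteq> H" "set (drop i (take j xs)) \<subseteq> H" for i j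
    using xsH by (auto dest: in_set_takeD in_set_dropD)
  have sG: "set (take i xs) \<subseteq> carrier G" "set (drop i xs) \<subseteq> carrier G" "set (drop i (take j xs)) \<subseteq> carrier G" for i j
    using sH HG by blast+
  have pH: "p i \<in> H" for i unfolding p_def using Hm x prodl_H sH by simp
  have sA: "set (take i xs) \<subseteq> A S" "set (drop i xs) \<subseteq> A S" "set (drop i (take j xs)) \<subseteq> A S" for i j
    using xs by (auto dest: in_set_takeD in_set_dropD)
  have up: "wS S (p i) (p j) = real j - real i" if ij: "i \<le> j" "j \<le> m" for i j
  proof -
    let ?mid = "drop i (take j xs)"
    have tj: "take j xs = take i xs @ ?mid" using ij by (metis append_take_drop_id min.absorb1 take_take)
    have pj: "prodl (take j xs) = prodl (take i xs) \<otimes> prodl ?mid" using tj sG prodl_append by metis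
    have PG: "prodl (take i xs) \<in> carrier G" "prodl ?mid \<in> carrier G"
      using prodl_closed[OF sG(1)] prodl_closed[OF sG(3)] by auto
    have e1: "inv (p i) \<otimes> p j = prodl ?mid"
      unfolding p_def pj using invmul[OF xG PG(1) m_closed[OF PG]] PG by (simp add: m_assoc[symmetric])
    have lm: "length ?mid = j - i" using ij unfolding m_def by simp
    have le: "WL S (prodl ?mid) \<le> j - i" using WL_le[OF sA(3)] lm by metis
    have xs3: "xs = take i xs @ ?mid @ drop j xs" using tj by (metis append_assoc append_take_drop_id)
    have "prodl xs = prodl (take i xs) \<otimes> (prodl ?mid \<otimes> prodl (drop j xs))"
      using xs3 sG prodl_append by (metis set_append le_sup_iff)
    then have "WL S ?g \<le> WL S (prodl (take i xs)) + WL S (prodl ?mid \<otimes> prodl (drop j xs))"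
      using xs WL_mult[OF S] prodl_H sH Hm by metis
    also have "\<dots> \<le> WL S (prodl (take i xs)) + (WL S (prodl ?mid) + WL S (prodl (drop j xs)))"
      using WL_mult[OF S] prodl_H sH by simp
    finally have "m \<le> WL S (prodl (take i xs)) + WL S (prodl ?mid) + WL S (prodl (drop j xs))"
      using xs unfolding m_def by simp
    moreover have "WL S (prodl (take i xs)) \<le> i" using WL_le[OF sA(1)] ij unfolding m_def
      by (metis length_take min.absorb2 order_trans)
    moreover have "WL S (prodl (drop j xs)) \<le> m - j" using WL_le[OF sA(2)] unfolding m_def by (metis length_drop)
    ultimately have "WL S (prodl ?mid) \<ge> j - i" using ij by linarith
    then have "WL S (prodl ?mid) = j - i" using le by simp
    then show ?thesis unfolding wS_def e1 using ij by simp
  qed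
  show ?thesis
  proof (intro exI[of _ p] exI[of _ m] conjI allI impI)
    show "p 0 = x" unfolding p_def using xG by simp
    show "p m = y" unfolding p_def m_def using xs xG HG y by (simp add: m_assoc[symmetric])
    show "p i \<in> H" for i by (rule pH)
    fix i j assume "i \<le> m" "j \<le> m"
    then show "wS S (p i) (p j) = \<bar>real i - real j\<bar>"
      using up[of i j] up[of j i] wsym[OF S pH pH] by (cases "i \<le> j") auto
  qed
qed

lemma wd: assumes S: "gen S" shows "\<exists>M\<ge>0. \<forall>x\<in>H. \<forall>y\<in>H. wS S x y \<le> M * dR x y + M"
proof -
  define F where "F = {g \<in> H. l g 1 \<le> LS S}"
  have LS0': "LS S \<ge> 0" using LS0 S by simp
  have "F \<subseteq> {g \<in> carrier G. lex_le (l g) (\<lambda>i. if i = 1 then int (nat (LS S)) else 0)}"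
  proof
    fix g assume "g \<in> F"
    then have g: "g \<in> H" "l g 1 \<le> LS S" unfolding F_def by auto
    have cv: "conc (\<lambda>i::nat. if i = 1 then int (nat (LS S)) else 0)" unfolding conc_def by simp
    have "lex_le (l g) (\<lambda>i. if i = 1 then int (nat (LS S)) else 0)"
      using lex_conc[OF lconc[OF g(1)] cv] g LS0' by simp
    then show "g \<in> {g \<in> carrier G. lex_le (l g) (\<lambda>i. if i = 1 then int (nat (LS S)) else 0)}"
      using HG g by simp
  qed
  then have finF: "finite F" using propl unfolding proper_lf_def by (metis finite_subset)
  have oneF: "\<one> \<in> F" unfolding F_def using H1 l1 LS0' by simp
  define M0 where "M0 = Max (WL S ` F)"
  have M0: "WL S g \<le> M0" if "g \<in> F" for g unfolding M0_def using finF that by simp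
  have claim: "int (WL S g) \<le> int M0 * max 1 (l g 1)" if "g \<in> H" for g
    using that
  proof (induction "nat (l g 1)" arbitrary: g rule: less_induct)
    case less
    show ?case
    proof (cases "l g 1 \<le> LS S")
      case True
      then have "WL S g \<le> M0" using M0 less.prems unfolding F_def by simp
      moreover have "int M0 \<le> int M0 * max 1 (l g 1)" by (simp add: mult_le_cancel_left1)
      ultimately show ?thesis by linarith
    next
      case False
      then obtain a b where ab: "a \<in> H" "b \<in> H" "g = a \<otimes> b" "0 < l a 1" "l a 1 \<le> LS S"
        "l g 1 = l a 1 + l b 1" using split[OF S less.prems] by auto
      have "nat (l b 1) < nat (l g 1)" using ab lnn[of b] by simp
      then have IH: "int (WL S b) \<le> int M0 * max 1 (l b 1)" using less.hyps ab(2) by blast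
      have bpos: "l b 1 \<ge> 1" using False ab by simp
      have "WL S g \<le> WL S a + WL S b" using WL_mult[OF S ab(1,2)] ab(3) by simp
      moreover have "WL S a \<le> M0" using M0 ab unfolding F_def by simp
      ultimately have "int (WL S g) \<le> int M0 + int M0 * l b 1" using IH bpos by simp
      also have "\<dots> = int M0 * (1 + l b 1)" by (simp add: algebra_simps)
      also have "\<dots> \<le> int M0 * (l g 1)" using ab by (intro mult_left_mono) auto
      finally show ?thesis using bpos ab by simp
    qed
  qed
  show ?thesis
  proof (intro exI[of _ "real M0"] conjI ballI)
    show "real M0 \<ge> 0" by simp
    fix x y assume x: "x \<in> H" and y: "y \<in> H"
    have gH: "inv x \<otimes> y \<in> H" using Hm Hi x y by simp
    have "int (WL S (inv x \<otimes> y)) \<le> int M0 * max 1 (D x y)" using claim[OF gH] unfolding D_def .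
    also have "\<dots> \<le> int M0 * (D x y + 1)" using Dnn[OF x y] by (intro mult_left_mono) auto
    finally have "real_of_int (int (WL S (inv x \<otimes> y))) \<le> real_of_int (int M0 * (D x y + 1))"
      by (simp only: of_int_le_iff)
    then show "wS S x y \<le> real M0 * dR x y + real M0" unfolding wS_def dR_def by (simp add: algebra_simps)
  qed
qed

end


lemma gh_cong: "gromov_hyperbolic X d \<Longrightarrow> (\<forall>x\<in>X. \<forall>y\<in>X. d' x y = d x y) \<Longrightarrow> gromov_hyperbolic X d'"
  unfolding gromov_hyperbolic_def by simp

lemma qi_cong: assumes "quasi_isometric X d Y e" "\<forall>x\<in>X. \<forall>y\<in>X. d' x y = d x y"
  shows "quasi_isometric X d' Y e"
proof -
  obtain f K C where h: "f ` X \<subseteq> Y" "K \<ge> 1" "C \<ge> 0"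
    "\<forall>x\<in>X. \<forall>x'\<in>X. d x x' / K - C \<le> e (f x) (f x') \<and> e (f x) (f x') \<le> K * d x x' + C"
    "\<forall>y\<in>Y. \<exists>x\<in>X. e y (f x) \<le> C" using assms(1) unfolding quasi_isometric_def by blast
  show ?thesis unfolding quasi_isometric_def using h assms(2)
    by (intro exI[of _ f] exI[of _ K] exI[of _ C]) simp
qed

context lfs begin

lemma cgeodH: assumes S: "gen S" and x: "x \<in> H" and y: "y \<in> H"
  shows "\<exists>N z. z 0 = x \<and> z N = y \<and> (\<forall>t\<le>N. z t \<in> H) \<and>
      (\<forall>s t u. s\<le>t \<longrightarrow> t\<le>u \<longrightarrow> u\<le>N \<longrightarrow> dR (z s) (z u) = dR (z s) (z t) + dR (z t) (z u)) \<and>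
      (\<forall>t<N. dR (z t) (z (Suc t)) \<le> real_of_int (LS S))"
proof -
  have gH: "inv x \<otimes> y \<in> H" using Hm Hi x y by simp
  obtain N z where c: "chain1 S (inv x \<otimes> y) z N" using cg1[OF S gH] by blast
  have z0: "z 0 = \<one>" and zN: "z N = inv x \<otimes> y" and zH: "\<And>t. t \<le> N \<Longrightarrow> z t \<in> H"
    and zex: "\<And>s t u. s\<le>t \<Longrightarrow> t\<le>u \<Longrightarrow> u\<le>N \<Longrightarrow> D (z s) (z u) = D (z s) (z t) + D (z t) (z u)"
    and zgap: "\<And>t. t<N \<Longrightarrow> D (z t) (z (Suc t)) \<le> LS S"
    using c unfolding chain1_def by blast+
  have xG: "x \<in> carrier G" using HG x by simp
  have zG: "\<And>t. t \<le> N \<Longrightarrow> z t \<in> carrier G" using zH HG by blast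
  show ?thesis
  proof (intro exI[of _ N] exI[of _ "\<lambda>t. x \<otimes> z t"] conjI allI impI)
    show "x \<otimes> z 0 = x" using z0 xG by simp
    show "x \<otimes> z N = y" using zN xG HG y by (simp add: m_assoc[symmetric])
    show "x \<otimes> z t \<in> H" if "t \<le> N" for t using Hm x zH that by simp
  next
    fix s t u assume "s \<le> t" "t \<le> u" "u \<le> N"
    then show "dR (x \<otimes> z s) (x \<otimes> z u) = dR (x \<otimes> z s) (x \<otimes> z t) + dR (x \<otimes> z t) (x \<otimes> z u)"
      unfolding dR_def using Dleft xG zG zex[of s t u] by simp
  next
    fix t assume "t < N"
    then show "dR (x \<otimes> z t) (x \<otimes> z (Suc t)) \<le> real_of_int (LS S)"
      unfolding dR_def using Dleft xG zG zgap[of t] by simp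
  qed
qed

lemma hyp_wS: assumes S: "gen S" shows "gromov_hyperbolic H (wS S)"
proof -
  obtain M where M0: "M \<ge> 0" and M: "\<forall>x\<in>H. \<forall>y\<in>H. wS S x y \<le> M * dR x y + M" using wd[OF S] by blast
  interpret hs: hypsp H dR "wS S" "real_of_int \<bar>\<delta> 1\<bar>" "real_of_int (LS S)" M
  proof
    show "\<And>x. x \<in> H \<Longrightarrow> dR x x = 0" unfolding dR_def using D0 HG by simp
    show "\<And>x y. x \<in> H \<Longrightarrow> y \<in> H \<Longrightarrow> dR x y = dR y x" unfolding dR_def using Dsym HG by simp
    show "\<And>x y z. x \<in> H \<Longrightarrow> y \<in> H \<Longrightarrow> z \<in> H \<Longrightarrow> dR x z \<le> dR x y + dR y z"
      unfolding dR_def using Dtri by (simp del: of_int_add add: of_int_add[symmetric])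
    show "\<And>e x y z. e \<in> H \<Longrightarrow> x \<in> H \<Longrightarrow> y \<in> H \<Longrightarrow> z \<in> H \<Longrightarrow>
      min (gp dR e x z) (gp dR e z y) - real_of_int \<bar>\<delta> 1\<bar> \<le> gp dR e x y" using hypH by blast
    show "0 \<le> real_of_int \<bar>\<delta> 1\<bar>" by simp
    show "0 \<le> real_of_int (LS S)" using LS0 S by simp
    show "0 \<le> M" by (rule M0)
    show "\<And>x y. x \<in> H \<Longrightarrow> y \<in> H \<Longrightarrow> \<exists>N z. z 0 = x \<and> z N = y \<and> (\<forall>t\<le>N. z t \<in> H) \<and>
      (\<forall>s t u. s\<le>t \<longrightarrow> t\<le>u \<longrightarrow> u\<le>N \<longrightarrow> dR (z s) (z u) = dR (z s) (z t) + dR (z t) (z u)) \<and>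
      (\<forall>t<N. dR (z t) (z (Suc t)) \<le> real_of_int (LS S))" using cgeodH[OF S] by blast
    show "\<And>x. x \<in> H \<Longrightarrow> wS S x x = 0" by (rule w0)
    show "\<And>x y. x \<in> H \<Longrightarrow> y \<in> H \<Longrightarrow> wS S x y = wS S y x" using wsym[OF S] by blast
    show "\<And>x y z. x \<in> H \<Longrightarrow> y \<in> H \<Longrightarrow> z \<in> H \<Longrightarrow> wS S x z \<le> wS S x y + wS S y z" using wtri[OF S] by blast
    show "\<And>x y. x \<in> H \<Longrightarrow> y \<in> H \<Longrightarrow> \<exists>p m. p 0 = x \<and> p m = y \<and> (\<forall>i\<le>m. p i \<in> H) \<and>
      (\<forall>i\<le>m. \<forall>j\<le>m. wS S (p i) (p j) = \<bar>real i - real j\<bar>)" using wgeod[OF S] by blast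
    show "\<And>x y. x \<in> H \<Longrightarrow> y \<in> H \<Longrightarrow> dR x y \<le> real_of_int (LS S) * wS S x y" using dw[OF S] by blast
    show "\<And>x y. x \<in> H \<Longrightarrow> y \<in> H \<Longrightarrow> wS S x y \<le> M * dR x y + M" using M by blast
  qed
  show ?thesis by (rule hs.hyperbolic_w)
qed

lemma qi_wS: assumes S: "gen S" shows "quasi_isometric H (wS S) H dR"
proof -
  obtain M where M0: "M \<ge> 0" and M: "\<forall>x\<in>H. \<forall>y\<in>H. wS S x y \<le> M * dR x y + M" using wd[OF S] by blast
  define K where "K = max 1 (max (real_of_int (LS S)) M)"
  have K1: "K \<ge> 1" unfolding K_def by simp
  have P: "wS S x x' / K - 1 \<le> dR x x' \<and> dR x x' \<le> K * wS S x x' + 1" if x: "x \<in> H" and x': "x' \<in> H" for x x'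
  proof
    have w0': "wS S x x' \<ge> 0" unfolding wS_def by simp
    have d0': "dR x x' \<ge> 0" unfolding dR_def using Dnn x x' by simp
    have "dR x x' \<le> real_of_int (LS S) * wS S x x'" using dw[OF S x x'] .
    also have "\<dots> \<le> K * wS S x x'" unfolding K_def using w0' by (intro mult_right_mono) auto
    finally show "dR x x' \<le> K * wS S x x' + 1" by simp
    have "wS S x x' \<le> M * dR x x' + M" using M x x' by blast
    also have "\<dots> \<le> K * dR x x' + K" unfolding K_def using d0' by (intro add_mono mult_right_mono) auto
    finally have "wS S x x' \<le> K * (dR x x' + 1)" by (simp add: algebra_simps)
    then have "wS S x x' / K \<le> dR x x' + 1" using K1 by (simp add: divide_simps mult.commute)
    then show "wS S x x' / K - 1 \<le> dR x x'" by simp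
  qed
  have Q: "\<exists>x\<in>H. dR y (id x) \<le> 1" if "y \<in> H" for y
    unfolding dR_def using D0 HG that by (intro bexI[of _ y]) auto
  show ?thesis unfolding quasi_isometric_def
    by (rule exI[of _ id], rule exI[of _ K], rule exI[of _ "1::real"]) (use P Q K1 in auto)
qed

lemma word_dist_eq: assumes S: "S \<subseteq> H" and x: "x \<in> H" and y: "y \<in> H"
  shows "word_dist G1 S x y = wS S x y"
  unfolding word_dist_def wS_def using WL_eq[OF S] m_inv_consistent[OF sub x] by simp

end

theorem lemma3p10:
  fixes G :: "('a, 'c) monoid_scheme" and n :: nat
    and l :: "'a \<Rightarrow> nat \<Rightarrow> int" and \<delta> :: "nat \<Rightarrow> int"
  assumes "group G" and "finitely_generated G" and "torsion_free G"
    and "zn_vec n \<delta>"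
    and "length_function G n l" and "proper_lf G l"
    and "regular_lf G l \<delta>" and "hyperbolic_lf G l \<delta>"
    and "ht \<delta> = 1"
    and "isolated_subgroup {g \<in> carrier G. ht (l g) \<le> 1} G"
    and "finitely_generated (G\<lparr>carrier := {g \<in> carrier G. ht (l g) \<le> 1}\<rparr>)"
  shows "torsion_free (G\<lparr>carrier := {g \<in> carrier G. ht (l g) \<le> 1}\<rparr>)
    \<and> word_hyperbolic (G\<lparr>carrier := {g \<in> carrier G. ht (l g) \<le> 1}\<rparr>)
    \<and> (\<forall>S. finite S \<and> S \<subseteq> {g \<in> carrier G. ht (l g) \<le> 1}
           \<and> generate (G\<lparr>carrier := {g \<in> carrier G. ht (l g) \<le> 1}\<rparr>) S
               = {g \<in> carrier G. ht (l g) \<le> 1}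
         \<longrightarrow> quasi_isometric {g \<in> carrier G. ht (l g) \<le> 1}
               (word_dist (G\<lparr>carrier := {g \<in> carrier G. ht (l g) \<le> 1}\<rparr>) S)
               {g \<in> carrier G. ht (l g) \<le> 1}
               (\<lambda>g h. real_of_int (l (inv\<^bsub>G\<^esub> g \<otimes>\<^bsub>G\<^esub> h) 1)))"
proof -
  define H where "H = {g \<in> carrier G. ht (l g) \<le> 1}"
  have sub: "subgroup H G" using assms(10) unfolding isolated_subgroup_def H_def by simp
  interpret lfs G n l \<delta> H
    by (rule lfs.intro) (use assms sub H_def in auto)
  have tf: "torsion_free G1"
    unfolding torsion_free_def
  proof (intro ballI allI impI)
    fix g and m :: nat assume g: "g \<in> carrier G1" and m: "m > 0" and e: "g [^]\<^bsub>G1\<^esub> m = \<one>\<^bsub>G1\<^esub>"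
    have "g [^]\<^bsub>G\<^esub> m = \<one>\<^bsub>G\<^esub>" using e nat_pow_consistent[of g m H] by simp
    then have "g = \<one>\<^bsub>G\<^esub>" using assms(3) g HG m unfolding torsion_free_def by simp
    then show "g = \<one>\<^bsub>G1\<^esub>" by simp
  qed
  obtain S0 where S0: "finite S0" "S0 \<subseteq> H" "generate G1 S0 = H"
    using assms(11) unfolding finitely_generated_def H_def by auto
  have wh: "word_hyperbolic G1"
    unfolding word_hyperbolic_def
  proof (intro conjI exI[of _ S0])
    show "group G1" using subgroup.subgroup_is_group[OF sub assms(1)] .
    show "finite S0" "S0 \<subseteq> carrier G1" "generate G1 S0 = carrier G1" using S0 by auto
    show "gromov_hyperbolic (carrier G1) (word_dist G1 S0)"
      using gh_cong[OF hyp_wS[of S0]] S0 word_dist_eq by simp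
  qed
  have qi: "quasi_isometric H (word_dist G1 S) H (\<lambda>g h. real_of_int (l (inv\<^bsub>G\<^esub> g \<otimes>\<^bsub>G\<^esub> h) 1))"
    if S: "finite S" "S \<subseteq> H" "generate G1 S = H" for S
  proof -
    have "quasi_isometric H (wS S) H dR" using qi_wS S by simp
    moreover have "dR = (\<lambda>g h. real_of_int (l (inv\<^bsub>G\<^esub> g \<otimes>\<^bsub>G\<^esub> h) 1))" unfolding dR_def D_def by simp
    ultimately show ?thesis using qi_cong word_dist_eq S by metis
  qed
  show ?thesis using tf wh qi unfolding H_def[symmetric] by blast
qed


end
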